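(* Let $L\ge2$ and suppose Assumptions 1, 4 and 5 hold. Then the gradient descent iterates satisfy, for all $t$: (i) for every $1\le k\le L$, $\|W_k(t)\|_F^2-\|W_k(t)\|_2^2\le D+2\mathcal{R}(W(0))$; (ii) for every $1\le k<L$ with $W_{k+1}(t)\neq0$, $$\langle v_{k+1}(t),u_k(t)\rangle^2\ge1-\frac{D+3\mathcal{R}(W(0))+\|W_{k+1}(0)\|_2^2+\|W_k(0)\|_2^2}{\|W_{k+1}(t)\|_2^2};$$ (iii) if $\max_{1\le k\le L}\|W_k(t)\|_F\to\infty$, then $\left|\left\langle\frac{w_{\mathrm{prod}}(t)}{\prod_{k=1}^L\|W_k(t)\|_F},v_1(t)\right\rangle\right|\to1$.
   Context: Setting: data $(x_i,y_i)_{i=1}^n$ with $x_i\in\mathbb{R}^d$, $\|x_i\|\le 1$, $y_i\in\{-1,+1\}$; $z_i:=y_ix_i$; the data are linearly separable. A depth-$L$ linear network is $W=(W_L,\dots,W_1)$ with $W_k\in\mathbb{R}^{d_k\times d_{k-1}}$, $d_0=d$, $d_L=1$, $w_{\mathrm{prod}}:=(W_L\cdots W_1)^\top$, and $\mathcal{R}(W)=\frac1n\sum_{i=1}^n\ell(\langle w_{\mathrm{prod}},z_i\rangle)$. $\|\cdot\|_F$ is the Frobenius norm and $\|\cdot\|_2$ the spectral norm. $B(R):=\{W:\max_k\|W_k\|_F\le R\}$. Gradient descent: $W(t+1)=W(t)-\eta_t\nabla\mathcal{R}(W(t))$, $t=0,1,2,\dots$. Assumption 1: $\ell$ is continuously differentiable,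 $\ell'<0$ everywhere, $\lim_{x\to-\infty}\ell(x)=\infty$, $\lim_{x\to\infty}\ell(x)=0$. Assumption 4: $\ell'$ is $\beta$-Lipschitz and $|\ell'|\le G$. Let $\beta(R):=2L^2R^{2L-2}(\beta+G)$. Assumption 5: $\eta_t=\min\{1/\beta(R_t),1\}$, where the radii $R_t$ satisfy $W(t)\in B(R_t-1)$ for every $t$, and $R_{t+1}=R_t$ whenever $W(t+1)\in B(R_t-1)$. The constant $$D:=\Big(\max_{1\le k\le L}\|W_k(0)\|_F^2\Big)-\|W_L(0)\|_F^2+\sum_{k=1}^{L-1}\big\|W_k(0)W_k(0)^\top-W_{k+1}(0)^\top W_{k+1}(0)\big\|_2.$$ $u_k(t),v_k(t)$ are a pair of first (top) left and right unit singular vectors of $W_k(t)$. *)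

theory Defs
  imports Complex_Main "Jordan_Normal_Form.Matrix"
begin

definition vnorm :: "real vec \<Rightarrow> real" where
  "vnorm v = sqrt (v \<bullet> v)"

definition frob :: "real mat \<Rightarrow> real" where
  "frob A = sqrt (\<Sum>i<dim_row A. \<Sum>j<dim_col A. (A $$ (i,j))\<^sup>2)"

definition spec :: "real mat \<Rightarrow> real" where
  "spec A = Sup {vnorm (A *\<^sub>v v) | v. v \<in> carrier_vec (dim_col A) \<and> vnorm v = 1}"

definition top_sv :: "real mat \<Rightarrow> real vec \<Rightarrow> real vec \<Rightarrow> bool" where
  "top_sv A u v \<longleftrightarrow> u \<in> carrier_vec (dim_row A) \<and> v \<in> carrier_vec (dim_col A) \<and>
     vnorm u = 1 \<and> vnorm v = 1 \<and>
     A *\<^sub>v v = spec A \<cdot>\<^sub>v u \<and> A\<^sup>T *\<^sub>v u = spec A \<cdot>\<^sub>v v"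

(* W_k \<cdots> W_1 (a d_k x d matrix); a network is W :: nat \<Rightarrow> real mat, layers indexed 1..L *)
fun mprod :: "nat \<Rightarrow> (nat \<Rightarrow> real mat) \<Rightarrow> nat \<Rightarrow> real mat" where
  "mprod d W 0 = 1\<^sub>m d"
| "mprod d W (Suc k) = W (Suc k) * mprod d W k"

(* w_prod = (W_L \<cdots> W_1)^T, as a vector in R^d (W_L \<cdots> W_1 is 1 x d) *)
definition wprod :: "nat \<Rightarrow> nat \<Rightarrow> (nat \<Rightarrow> real mat) \<Rightarrow> real vec" where
  "wprod d L W = row (mprod d W L) 0"

definition risk :: "(real \<Rightarrow> real) \<Rightarrow> nat \<Rightarrow> (nat \<Rightarrow> real vec) \<Rightarrow> nat \<Rightarrow> nat
    \<Rightarrow> (nat \<Rightarrow> real mat) \<Rightarrow> real" where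
  "risk l n z d L W = (1 / real n) * (\<Sum>i<n. l (wprod d L W \<bullet> z i))"

definition set_entry :: "real mat \<Rightarrow> nat \<Rightarrow> nat \<Rightarrow> real \<Rightarrow> real mat" where
  "set_entry A i j s = mat (dim_row A) (dim_col A) (\<lambda>(a,b). if (a,b) = (i,j) then s else A $$ (a,b))"

definition grad_k :: "(real \<Rightarrow> real) \<Rightarrow> nat \<Rightarrow> (nat \<Rightarrow> real vec) \<Rightarrow> nat \<Rightarrow> nat
    \<Rightarrow> (nat \<Rightarrow> real mat) \<Rightarrow> nat \<Rightarrow> real mat" where
  "grad_k l n z d L W k = mat (dim_row (W k)) (dim_col (W k))
     (\<lambda>(i,j). THE D. ((\<lambda>s. risk l n z d L (W(k := set_entry (W k) i j s))) has_real_derivative D) (at (W k $$ (i,j))))"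

definition betaR :: "nat \<Rightarrow> real \<Rightarrow> real \<Rightarrow> real \<Rightarrow> real" where
  "betaR L beta G R = 2 * real L ^ 2 * R ^ (2 * L - 2) * (beta + G)"

definition Dconst :: "nat \<Rightarrow> (nat \<Rightarrow> real mat) \<Rightarrow> real" where
  "Dconst L W0 = Max {frob (W0 k) ^ 2 | k. 1 \<le> k \<and> k \<le> L} - frob (W0 L) ^ 2
     + (\<Sum>k\<in>{1..<L}. spec (W0 k * (W0 k)\<^sup>T - (W0 (Suc k))\<^sup>T * W0 (Suc k)))"

end

theory Submission
  imports Defs
begin

abbreviation N :: "real vec \<Rightarrow> real" where "N v \<equiv> v \<bullet> v"

lemma N_nonneg: "0 \<le> N v"
  unfolding scalar_prod_def by (rule sum_nonneg) simp

lemma vnorm_sq: "vnorm v ^ 2 = N v" using N_nonneg[of v] unfolding vnorm_def by simp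
lemma vnorm_nonneg: "vnorm v \<ge> 0" unfolding vnorm_def using N_nonneg[of v] by simp

lemma N_zero_iff: "N v = 0 \<Longrightarrow> v = 0\<^sub>v (dim_vec v)"
proof -
  assume "N v = 0"
  hence "\<forall>i\<in>{0..<dim_vec v}. v $ i * v $ i = 0"
    unfolding scalar_prod_def by (subst sum_nonneg_eq_0_iff[symmetric]) auto
  thus "v = 0\<^sub>v (dim_vec v)" by (intro eq_vecI) auto
qed

lemma sp_comm: "dim_vec v = dim_vec w \<Longrightarrow> (v::real vec) \<bullet> w = w \<bullet> v"
  unfolding scalar_prod_def by (auto intro: sum.cong simp: ac_simps)

lemma cs_sum: fixes a b :: "nat \<Rightarrow> real"
  shows "(\<Sum>i\<in>A. a i * b i)^2 \<le> (\<Sum>i\<in>A. a i ^ 2) * (\<Sum>i\<in>A. b i ^ 2)"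
proof (cases "(\<Sum>i\<in>A. b i ^ 2) = 0")
  case True
  show ?thesis
  proof (cases "finite A")
    case True
    with \<open>(\<Sum>i\<in>A. b i ^ 2) = 0\<close> have "\<forall>i\<in>A. b i ^ 2 = 0"
      by (subst sum_nonneg_eq_0_iff[symmetric]) auto
    thus ?thesis by simp
  qed simp
next
  case False
  let ?A = "\<Sum>i\<in>A. a i ^ 2" and ?B = "\<Sum>i\<in>A. b i ^ 2" and ?C = "\<Sum>i\<in>A. a i * b i"
  have B: "?B > 0" using False by (metis (mono_tags, lifting) order_le_less sum_nonneg zero_le_power2)
  define c where "c = ?C / ?B"
  have "0 \<le> (\<Sum>i\<in>A. (a i - c * b i)^2)" by (auto intro: sum_nonneg)
  also have "\<dots> = ?A - 2 * c * ?C + c^2 * ?B"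
    by (simp add: power2_eq_square algebra_simps sum.distrib sum_subtractf sum_distrib_left)
  also have "\<dots> = ?A - ?C^2 / ?B" using B unfolding c_def by (simp add: power2_eq_square field_simps)
  finally have "?C^2 / ?B \<le> ?A" by simp
  thus ?thesis using B by (simp add: field_simps)
qed

lemma cs: assumes "dim_vec v = dim_vec w" shows "(v \<bullet> w)^2 \<le> N v * N w"
  using cs_sum[of "\<lambda>i. v $ i" "\<lambda>i. w $ i" "{0..<dim_vec w}"] assms unfolding scalar_prod_def by (simp add: power2_eq_square)

lemma cs_abs: assumes "dim_vec v = dim_vec w" shows "\<bar>v \<bullet> w\<bar> \<le> sqrt (N v) * sqrt (N w)"
proof -
  have "\<bar>v \<bullet> w\<bar> = sqrt ((v \<bullet> w)^2)" by simp
  also have "\<dots> \<le> sqrt (N v * N w)" using cs[OF assms] by (rule real_sqrt_le_mono)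
  finally show ?thesis by (simp add: real_sqrt_mult)
qed

lemma sum_sq_le: fixes a :: "nat \<Rightarrow> real"
  shows "(\<Sum>i\<in>A. a i)^2 \<le> real (card A) * (\<Sum>i\<in>A. a i ^ 2)"
  using cs_sum[of "\<lambda>_. 1" a A] by simp

lemma mv_index: "A \<in> carrier_mat r c \<Longrightarrow> x \<in> carrier_vec c \<Longrightarrow> i < r \<Longrightarrow> (A *\<^sub>v x) $ i = (\<Sum>j<c. A $$ (i,j) * x $ j)"
  by (auto simp: scalar_prod_def row_def atLeast0LessThan intro!: sum.cong)

lemma frob_sq: "frob A ^ 2 = (\<Sum>i<dim_row A. \<Sum>j<dim_col A. (A $$ (i,j))\<^sup>2)"
  unfolding frob_def by (subst real_sqrt_pow2) (auto intro!: sum_nonneg)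

lemma frob_nonneg: "frob A \<ge> 0" unfolding frob_def by (auto intro!: sum_nonneg)

lemma N_mv_le: assumes A: "A \<in> carrier_mat r c" and x: "x \<in> carrier_vec c"
  shows "N (A *\<^sub>v x) \<le> frob A ^ 2 * N x"
proof -
  have "N (A *\<^sub>v x) = (\<Sum>i<r. ((A *\<^sub>v x) $ i)^2)"
    using A by (simp add: scalar_prod_def atLeast0LessThan power2_eq_square)
  also have "\<dots> = (\<Sum>i<r. (\<Sum>j<c. A $$ (i,j) * x $ j)^2)"
    using A x by (intro sum.cong) (auto simp: mv_index[OF A x] simp del: index_mult_mat_vec)
  also have "\<dots> \<le> (\<Sum>i<r. (\<Sum>j<c. (A $$ (i,j))^2) * (\<Sum>j<c. (x $ j)^2))"
    by (intro sum_mono cs_sum)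
  also have "\<dots> = frob A ^ 2 * N x"
    unfolding frob_sq using A x by (simp add: scalar_prod_def atLeast0LessThan sum_distrib_right power2_eq_square)
  finally show ?thesis .
qed

lemma frob_transpose: "frob (transpose_mat A) = frob A"
  unfolding frob_def by (simp, subst sum.swap, auto intro!: sum.cong)

lemma N_tmv_le: assumes A: "A \<in> carrier_mat r c" and x: "x \<in> carrier_vec r"
  shows "N (transpose_mat A *\<^sub>v x) \<le> frob A ^ 2 * N x"
  using N_mv_le[of "transpose_mat A" c r x] A x by (simp add: frob_transpose)

lemma vnorm_mv_le: assumes A: "A \<in> carrier_mat r c" and x: "x \<in> carrier_vec c"
  shows "vnorm (A *\<^sub>v x) \<le> frob A * vnorm x"
proof -
  have "vnorm (A *\<^sub>v x) = sqrt (N (A *\<^sub>v x))" unfolding vnorm_def ..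
  also have "\<dots> \<le> sqrt (frob A ^ 2 * N x)" using N_mv_le[OF A x] by (rule real_sqrt_le_mono)
  also have "\<dots> = frob A * vnorm x" using frob_nonneg[of A] by (simp add: real_sqrt_mult vnorm_def)
  finally show ?thesis .
qed

lemma spec_bdd: assumes A: "A \<in> carrier_mat r c"
  shows "bdd_above {vnorm (A *\<^sub>v v) | v. v \<in> carrier_vec (dim_col A) \<and> vnorm v = 1}"
proof -
  { fix v assume v: "v \<in> carrier_vec (dim_col A)" "vnorm v = 1"
    have "vnorm (A *\<^sub>v v) \<le> frob A" using vnorm_mv_le[OF A, of v] v A by simp }
  thus ?thesis unfolding bdd_above_def by blast
qed

lemma spec_upper: assumes A: "A \<in> carrier_mat r c" and v: "v \<in> carrier_vec c" "vnorm v = 1"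
  shows "vnorm (A *\<^sub>v v) \<le> spec A"
  unfolding spec_def using A v by (intro cSup_upper[OF _ spec_bdd[OF A]]) auto

lemma vnorm_unit: "j < c \<Longrightarrow> vnorm (unit_vec c j) = 1"
  unfolding vnorm_def by simp

lemma spec_least: assumes A: "A \<in> carrier_mat r c" and c: "c > 0"
  and K: "\<And>v. v \<in> carrier_vec c \<Longrightarrow> vnorm v = 1 \<Longrightarrow> vnorm (A *\<^sub>v v) \<le> K"
shows "spec A \<le> K"
  unfolding spec_def
proof (rule cSup_least)
  show "{vnorm (A *\<^sub>v v) |v. v \<in> carrier_vec (dim_col A) \<and> vnorm v = 1} \<noteq> {}"
    using A c vnorm_unit[of 0 c] by (auto intro!: exI[of _ "unit_vec c 0"])
qed (use A K in auto)

lemma spec_nonneg: assumes A: "A \<in> carrier_mat r c" and c: "c > 0" shows "0 \<le> spec A"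
  using spec_upper[OF A _ vnorm_unit[OF c]] vnorm_nonneg[of "A *\<^sub>v unit_vec c 0"] by simp

lemma spec_le_frob: assumes A: "A \<in> carrier_mat r c" and c: "c > 0" shows "spec A \<le> frob A"
proof (rule spec_least[OF A c])
  fix v assume "v \<in> carrier_vec c" "vnorm v = 1"
  thus "vnorm (A *\<^sub>v v) \<le> frob A" using vnorm_mv_le[OF A, of v] by simp
qed

lemma N_smult: "N (k \<cdot>\<^sub>v v) = k^2 * N v"
  by (simp add: power2_eq_square)

lemma N_spec: assumes A: "A \<in> carrier_mat r c" and x: "x \<in> carrier_vec c"
  shows "N (A *\<^sub>v x) \<le> spec A ^ 2 * N x"
proof (cases "N x = 0")
  case True
  thus ?thesis using N_mv_le[OF A x] N_nonneg[of "A *\<^sub>v x"] by simp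
next
  case False
  hence Nx: "N x > 0" using N_nonneg[of x] by simp
  hence c: "c > 0" using x by (cases c) (auto simp: scalar_prod_def)
  define s where "s = sqrt (N x)"
  have s: "s > 0" "s^2 = N x" using Nx unfolding s_def by auto
  define v where "v = (1/s) \<cdot>\<^sub>v x"
  have v: "v \<in> carrier_vec c" using x unfolding v_def by simp
  have Nv: "N v = 1" using s Nx unfolding v_def N_smult by (simp add: power_divide)
  hence "vnorm v = 1" unfolding vnorm_def by simp
  from spec_upper[OF A v this] have le: "vnorm (A *\<^sub>v v) \<le> spec A" .
  have "N (A *\<^sub>v v) = (1/s)^2 * N (A *\<^sub>v x)" unfolding v_def mult_mat_vec[OF A x] N_smult ..
  moreover have "N (A *\<^sub>v v) \<le> spec A ^ 2"
  proof -
    have "N (A *\<^sub>v v) = vnorm (A *\<^sub>v v) ^ 2" by (simp add: vnorm_sq)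
    also have "\<dots> \<le> spec A ^ 2" using le vnorm_nonneg by (intro power_mono) auto
    finally show ?thesis .
  qed
  ultimately have "N (A *\<^sub>v x) / s^2 \<le> spec A ^ 2" by (simp add: power_divide)
  thus ?thesis using s Nx by (simp add: field_simps)
qed

lemma spec_sq_least: assumes A: "A \<in> carrier_mat r c" and c: "c > 0"
  and K: "\<And>v. v \<in> carrier_vec c \<Longrightarrow> N (A *\<^sub>v v) \<le> K * N v"
shows "spec A ^ 2 \<le> K"
proof -
  have "N (A *\<^sub>v unit_vec c 0) \<le> K" using K[of "unit_vec c 0"] c by simp
  hence K0: "K \<ge> 0" using N_nonneg[of "A *\<^sub>v unit_vec c 0"] by simp
  have "spec A \<le> sqrt K"
  proof (rule spec_least[OF A c])
    fix v assume v: "v \<in> carrier_vec c" "vnorm v = 1"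
    hence "N v = 1" using vnorm_sq[of v] by simp
    hence "N (A *\<^sub>v v) \<le> K" using K[OF v(1)] by simp
    thus "vnorm (A *\<^sub>v v) \<le> sqrt K" unfolding vnorm_def by (rule real_sqrt_le_mono)
  qed
  hence "spec A ^ 2 \<le> (sqrt K)^2" using spec_nonneg[OF A c] by (intro power_mono) auto
  thus ?thesis using K0 by simp
qed

lemma N_spec_T: assumes A: "A \<in> carrier_mat r c" and y: "y \<in> carrier_vec r"
  shows "N (transpose_mat A *\<^sub>v y) \<le> spec A ^ 2 * N y"
proof -
  define w where "w = transpose_mat A *\<^sub>v y"
  have w: "w \<in> carrier_vec c" using A y unfolding w_def by simp
  have "N w = y \<bullet> (A *\<^sub>v w)" unfolding w_def using transpose_vec_mult_scalar[OF A _ y, of "transpose_mat A *\<^sub>v y"] A y by simp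
  hence "(N w)^2 \<le> N y * N (A *\<^sub>v w)" using cs[of y "A *\<^sub>v w"] A y by simp
  also have "\<dots> \<le> N y * (spec A ^ 2 * N w)" using N_spec[OF A w] N_nonneg[of y] by (intro mult_left_mono) auto
  finally have *: "(N w)^2 \<le> N y * (spec A ^ 2 * N w)" .
  show ?thesis
  proof (cases "N w = 0")
    case True thus ?thesis using N_nonneg[of y] unfolding w_def by simp
  next
    case False
    hence "N w > 0" using N_nonneg[of w] by simp
    have "N w * N w \<le> (N y * spec A ^ 2) * N w" using * by (simp add: power2_eq_square algebra_simps)
    hence "N w \<le> N y * spec A ^ 2" using \<open>N w > 0\<close> by (rule mult_right_le_imp_le)
    thus ?thesis unfolding w_def by (simp add: algebra_simps)
  qed
qed

lemma quad_spec: assumes M: "M \<in> carrier_mat m m" and x: "x \<in> carrier_vec m"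
  shows "\<bar>x \<bullet> (M *\<^sub>v x)\<bar> \<le> spec M * N x"
proof (cases "m = 0")
  case True thus ?thesis using x M by (simp add: scalar_prod_def)
next
  case False
  have "(x \<bullet> (M *\<^sub>v x))^2 \<le> N x * N (M *\<^sub>v x)" using cs[of x "M *\<^sub>v x"] M x by simp
  also have "\<dots> \<le> N x * (spec M ^ 2 * N x)" using N_spec[OF M x] N_nonneg[of x] by (intro mult_left_mono) auto
  also have "\<dots> = (spec M * N x)^2" by (simp add: power2_eq_square)
  finally have "(x \<bullet> (M *\<^sub>v x))^2 \<le> (spec M * N x)^2" .
  moreover have "spec M * N x \<ge> 0" using spec_nonneg[OF M] False N_nonneg[of x] by simp
  ultimately show ?thesis using abs_le_square_iff by (metis abs_of_nonneg)
qed

lemma quad_identity: assumes A: "A \<in> carrier_mat m p" and B: "B \<in> carrier_mat q m" and x: "x \<in> carrier_vec m"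
  shows "x \<bullet> ((A * transpose_mat A - transpose_mat B * B) *\<^sub>v x) = N (transpose_mat A *\<^sub>v x) - N (B *\<^sub>v x)"
proof -
  have AA: "A * transpose_mat A \<in> carrier_mat m m" using A by simp
  have BB: "transpose_mat B * B \<in> carrier_mat m m" using B by simp
  have "(A * transpose_mat A - transpose_mat B * B) *\<^sub>v x = A *\<^sub>v (transpose_mat A *\<^sub>v x) - transpose_mat B *\<^sub>v (B *\<^sub>v x)"
    using A B x by (simp add: minus_mult_distrib_mat_vec[OF AA BB x])
  hence "x \<bullet> ((A * transpose_mat A - transpose_mat B * B) *\<^sub>v x) = x \<bullet> (A *\<^sub>v (transpose_mat A *\<^sub>v x)) - x \<bullet> (transpose_mat B *\<^sub>v (B *\<^sub>v x))"
    using A B x by (simp add: scalar_prod_minus_distrib)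
  also have "x \<bullet> (A *\<^sub>v (transpose_mat A *\<^sub>v x)) = N (transpose_mat A *\<^sub>v x)"
    using transpose_vec_mult_scalar[OF A, of "transpose_mat A *\<^sub>v x" x] A x by simp
  also have "x \<bullet> (transpose_mat B *\<^sub>v (B *\<^sub>v x)) = N (B *\<^sub>v x)"
    using transpose_vec_mult_scalar[OF B x, of "B *\<^sub>v x"] A B x sp_comm by simp
  finally show ?thesis .
qed

lemma spec_pos: assumes A: "A \<in> carrier_mat r c" and nz: "A \<noteq> 0\<^sub>m r c"
  shows "spec A > 0"
proof -
  obtain i j where ij: "i < r" "j < c" "A $$ (i,j) \<noteq> 0"
    using nz A by (metis carrier_matD(1,2) eq_matI index_zero_mat(1,2,3))
  have "(A *\<^sub>v unit_vec c j) $ i = A $$ (i,j)" using A ij by simp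
  have "(A $$ (i,j))^2 \<le> N (A *\<^sub>v unit_vec c j)"
  proof -
    have "N (A *\<^sub>v unit_vec c j) = (\<Sum>k<r. ((A *\<^sub>v unit_vec c j) $ k)^2)"
      using A by (simp add: scalar_prod_def atLeast0LessThan power2_eq_square)
    also have "\<dots> \<ge> ((A *\<^sub>v unit_vec c j) $ i)^2"
      using ij by (intro member_le_sum) auto
    finally show ?thesis using A ij by simp
  qed
  also have "\<dots> \<le> spec A ^ 2 * N (unit_vec c j)" using N_spec[OF A] by simp
  also have "\<dots> = spec A ^ 2" using ij by simp
  finally have "spec A ^ 2 > 0" using ij by (smt (verit) zero_less_power2)
  moreover have "spec A \<ge> 0" using spec_nonneg[OF A] ij by simp
  ultimately show ?thesis by (simp add: less_le)
qed

lemma frob_le_spec_row: assumes A: "A \<in> carrier_mat 1 c" and c: "c > 0"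
  shows "frob A \<le> spec A"
proof -
  define x where "x = row A 0"
  have x: "x \<in> carrier_vec c" using A unfolding x_def by (metis carrier_matD(2) row_carrier)
  have Nx: "N x = frob A ^ 2" unfolding frob_sq x_def using A
    by (simp add: scalar_prod_def atLeast0LessThan power2_eq_square)
  have "(A *\<^sub>v x) $ 0 = N x" using A unfolding x_def by simp
  hence "N (A *\<^sub>v x) = (N x)^2" using A by (simp add: scalar_prod_def power2_eq_square)
  hence "(frob A ^ 2)^2 \<le> spec A ^ 2 * frob A ^ 2" using N_spec[OF A x] Nx by simp
  hence H: "frob A ^ 2 * frob A ^ 2 \<le> spec A ^ 2 * frob A ^ 2" by (simp add: power2_eq_square)
  have "frob A ^ 2 \<le> spec A ^ 2"
  proof (cases "frob A = 0")
    case False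
    hence "frob A ^ 2 > 0" by simp
    from mult_right_le_imp_le[OF H this] show ?thesis .
  qed simp
  thus ?thesis using spec_nonneg[OF A c] by (rule power2_le_imp_le)
qed

fun qv :: "(nat \<Rightarrow> real mat) \<Rightarrow> real vec \<Rightarrow> nat \<Rightarrow> real vec" where
  "qv V z 0 = z"
| "qv V z (Suc k) = V (Suc k) *\<^sub>v qv V z k"

fun rv' :: "nat \<Rightarrow> (nat \<Rightarrow> real mat) \<Rightarrow> nat \<Rightarrow> real vec" where
  "rv' L V 0 = vec 1 (\<lambda>_. 1)"
| "rv' L V (Suc j) = transpose_mat (V (L - j)) *\<^sub>v rv' L V j"

definition rv :: "nat \<Rightarrow> (nat \<Rightarrow> real mat) \<Rightarrow> nat \<Rightarrow> real vec" where
  "rv L V k = rv' L V (L - k)"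

definition netdim :: "(nat \<Rightarrow> nat) \<Rightarrow> nat \<Rightarrow> (nat \<Rightarrow> real mat) \<Rightarrow> bool" where
  "netdim dims L V \<longleftrightarrow> (\<forall>k. 1 \<le> k \<and> k \<le> L \<longrightarrow> V k \<in> carrier_mat (dims k) (dims (k-1)))"

lemma netdimD: "netdim dims L V \<Longrightarrow> 1 \<le> k \<Longrightarrow> k \<le> L \<Longrightarrow> V k \<in> carrier_mat (dims k) (dims (k-1))"
  unfolding netdim_def by auto

lemma qv_carrier: "netdim dims L V \<Longrightarrow> z \<in> carrier_vec (dims 0) \<Longrightarrow> k \<le> L \<Longrightarrow> qv V z k \<in> carrier_vec (dims k)"
proof (induction k)
  case (Suc k)
  have "V (Suc k) \<in> carrier_mat (dims (Suc k)) (dims k)" using netdimD[OF Suc.prems(1), of "Suc k"] Suc.prems by simp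
  thus ?case using Suc by auto
qed simp

lemma rv'_carrier: "netdim dims L V \<Longrightarrow> dims L = 1 \<Longrightarrow> j \<le> L \<Longrightarrow> rv' L V j \<in> carrier_vec (dims (L - j))"
proof (induction j)
  case (Suc j)
  have e: "L - j - 1 = L - Suc j" by simp
  have "V (L - j) \<in> carrier_mat (dims (L - j)) (dims (L - j - 1))"
    using netdimD[OF Suc.prems(1), of "L - j"] Suc.prems(3) by simp
  hence V: "V (L - j) \<in> carrier_mat (dims (L - j)) (dims (L - Suc j))" unfolding e .
  have r: "rv' L V j \<in> carrier_vec (dims (L - j))" using Suc by simp
  show ?case using V r by simp
qed simp

lemma rv_carrier: "netdim dims L V \<Longrightarrow> dims L = 1 \<Longrightarrow> k \<le> L \<Longrightarrow> rv L V k \<in> carrier_vec (dims k)"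
  unfolding rv_def using rv'_carrier[of dims L V "L - k"] by simp

lemma rv_step: "1 \<le> k \<Longrightarrow> k \<le> L \<Longrightarrow> rv L V (k-1) = transpose_mat (V k) *\<^sub>v rv L V k"
proof -
  assume k: "1 \<le> k" "k \<le> L"
  have "L - (k-1) = Suc (L - k)" using k by simp
  moreover have "L - (L - k) = k" using k by simp
  ultimately show ?thesis unfolding rv_def by simp
qed

lemma rv_L: "rv L V L = vec 1 (\<lambda>_. 1)" unfolding rv_def by simp

lemma mprod_carrier: "netdim dims L V \<Longrightarrow> dims 0 = d \<Longrightarrow> k \<le> L \<Longrightarrow> mprod d V k \<in> carrier_mat (dims k) d"
proof (induction k)
  case (Suc k)
  have "V (Suc k) \<in> carrier_mat (dims (Suc k)) (dims k)" using netdimD[OF Suc.prems(1), of "Suc k"] Suc.prems by simp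
  thus ?case using Suc by auto
qed simp

lemma mprod_mv: "netdim dims L V \<Longrightarrow> dims 0 = d \<Longrightarrow> z \<in> carrier_vec d \<Longrightarrow> k \<le> L \<Longrightarrow> mprod d V k *\<^sub>v z = qv V z k"
proof (induction k)
  case (Suc k)
  have "V (Suc k) \<in> carrier_mat (dims (Suc k)) (dims k)" using netdimD[OF Suc.prems(1), of "Suc k"] Suc.prems by simp
  moreover have "mprod d V k \<in> carrier_mat (dims k) d" using mprod_carrier Suc.prems by simp
  ultimately show ?case using Suc by simp
qed simp

lemma p_top: assumes nd: "netdim dims L V" and d: "dims 0 = d" and dL: "dims L = 1" and z: "z \<in> carrier_vec d"
  shows "wprod d L V \<bullet> z = (qv V z L) $ 0"
proof -
  have M: "mprod d V L \<in> carrier_mat 1 d" using mprod_carrier[OF nd d, of L] dL by simp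
  have "(qv V z L) $ 0 = (mprod d V L *\<^sub>v z) $ 0" using mprod_mv[OF nd d z, of L] by simp
  also have "\<dots> = row (mprod d V L) 0 \<bullet> z" using M by simp
  finally show ?thesis unfolding wprod_def by simp
qed

lemma p_eq: assumes nd: "netdim dims L V" and d: "dims 0 = d" and dL: "dims L = 1" and z: "z \<in> carrier_vec d"
  shows "k \<le> L \<Longrightarrow> wprod d L V \<bullet> z = rv L V k \<bullet> qv V z k"
proof (induction "L - k" arbitrary: k)
  case 0
  hence k: "k = L" by simp
  have q: "qv V z L \<in> carrier_vec 1" using qv_carrier[OF nd, of z L] z d dL by simp
  show ?case unfolding k rv_L p_top[OF nd d dL z] using q by (simp add: scalar_prod_def)
next
  case (Suc j)
  hence k: "k < L" "L - Suc k = j" by auto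
  have IH: "wprod d L V \<bullet> z = rv L V (Suc k) \<bullet> qv V z (Suc k)" using Suc.hyps(1)[of "Suc k"] k by simp
  have Vk: "V (Suc k) \<in> carrier_mat (dims (Suc k)) (dims k)" using netdimD[OF nd, of "Suc k"] k by simp
  have qk: "qv V z k \<in> carrier_vec (dims k)" using qv_carrier[OF nd, of z k] z d k by simp
  have rk: "rv L V (Suc k) \<in> carrier_vec (dims (Suc k))" using rv_carrier[OF nd dL, of "Suc k"] k by simp
  have "rv L V k = transpose_mat (V (Suc k)) *\<^sub>v rv L V (Suc k)" using rv_step[of "Suc k" L V] k by simp
  hence "rv L V k \<bullet> qv V z k = rv L V (Suc k) \<bullet> (V (Suc k) *\<^sub>v qv V z k)"
    using transpose_vec_mult_scalar[OF Vk qk rk] by simp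
  thus ?case using IH by simp
qed

lemma qv_upd: "j < k \<Longrightarrow> qv (V(k:=E)) z j = qv V z j"
  by (induction j) auto

lemma rv'_upd: "k \<le> L \<Longrightarrow> j \<le> L - k \<Longrightarrow> rv' L (V(k:=E)) j = rv' L V j"
  by (induction j) auto

lemma rv_upd: "k \<le> j \<Longrightarrow> j \<le> L \<Longrightarrow> rv L (V(k:=E)) j = rv L V j"
  unfolding rv_def by (rule rv'_upd) auto

lemma bilin_sum: assumes A: "A \<in> carrier_mat r c" and y: "y \<in> carrier_vec r" and q: "q \<in> carrier_vec c"
  shows "y \<bullet> (A *\<^sub>v q) = (\<Sum>i<r. \<Sum>j<c. y $ i * A $$ (i,j) * q $ j)"
  using A y q by (simp add: scalar_prod_def mv_index[OF A q] atLeast0LessThan sum_distrib_left mult.assoc)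

lemma set_entry_carrier: "A \<in> carrier_mat r c \<Longrightarrow> set_entry A a b s \<in> carrier_mat r c"
  unfolding set_entry_def by auto

lemma set_entry_bilin: assumes A: "A \<in> carrier_mat r c" and ab: "a < r" "b < c"
  and y: "y \<in> carrier_vec r" and q: "q \<in> carrier_vec c"
shows "y \<bullet> (set_entry A a b s *\<^sub>v q) = y \<bullet> (A *\<^sub>v q) + (s - A $$ (a,b)) * (y $ a * q $ b)"
proof -
  have E: "set_entry A a b s \<in> carrier_mat r c" using set_entry_carrier[OF A] .
  have "y \<bullet> (set_entry A a b s *\<^sub>v q) = (\<Sum>i<r. \<Sum>j<c. y $ i * set_entry A a b s $$ (i,j) * q $ j)"
    by (rule bilin_sum[OF E y q])
  also have "\<dots> = (\<Sum>i<r. \<Sum>j<c. y $ i * A $$ (i,j) * q $ j + (if i = a \<and> j = b then (s - A $$ (a,b)) * (y $ a * q $ b) else 0))"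
  proof (intro sum.cong refl)
    fix i j assume ij: "i \<in> {..<r}" "j \<in> {..<c}"
    have e: "set_entry A a b s $$ (i,j) = (if (i,j) = (a,b) then s else A $$ (i,j))"
      using A ij unfolding set_entry_def by auto
    show "y $ i * set_entry A a b s $$ (i,j) * q $ j = y $ i * A $$ (i,j) * q $ j + (if i = a \<and> j = b then (s - A $$ (a,b)) * (y $ a * q $ b) else 0)"
    proof (cases "i = a \<and> j = b")
      case True thus ?thesis unfolding e by (simp add: algebra_simps)
    next
      case False thus ?thesis unfolding e by auto
    qed
  qed
  also have "\<dots> = (\<Sum>i<r. \<Sum>j<c. y $ i * A $$ (i,j) * q $ j) + (s - A $$ (a,b)) * (y $ a * q $ b)"
  proof -
    define K where "K = (s - A $$ (a,b)) * (y $ a * q $ b)"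
    have "\<And>i. (\<Sum>j<c. (if i = a \<and> j = b then K else 0)) = (if i = a then K else 0)"
      using ab by (simp add: sum.delta')
    hence "(\<Sum>i<r. \<Sum>j<c. (if i = a \<and> j = b then K else 0)) = K"
      using ab by (simp add: sum.delta')
    thus ?thesis unfolding K_def[symmetric] by (simp add: sum.distrib)
  qed
  also have "(\<Sum>i<r. \<Sum>j<c. y $ i * A $$ (i,j) * q $ j) = y \<bullet> (A *\<^sub>v q)" by (rule bilin_sum[OF A y q, symmetric])
  finally show ?thesis .
qed

lemma netdim_upd: "netdim dims L V \<Longrightarrow> E \<in> carrier_mat (dims k) (dims (k-1)) \<Longrightarrow> netdim dims L (V(k:=E))"
  unfolding netdim_def by auto

lemma inner_deriv: fixes l dl :: "real \<Rightarrow> real"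
  assumes ld: "\<And>s. (l has_real_derivative dl s) (at s)"
  shows "((\<lambda>s. (1/real n) * (\<Sum>i<n. l (c i + (s - s0) * m i))) has_real_derivative
          (1/real n) * (\<Sum>i<n. dl (c i) * m i)) (at s0)"
proof -
  have "\<And>i. ((\<lambda>s. l (c i + (s - s0) * m i)) has_real_derivative dl (c i + (s0 - s0) * m i) * m i) (at s0)"
  proof -
    fix i
    have "((\<lambda>s. c i + (s - s0) * m i) has_real_derivative m i) (at s0)"
      by (auto intro!: derivative_eq_intros)
    thus "((\<lambda>s. l (c i + (s - s0) * m i)) has_real_derivative dl (c i + (s0 - s0) * m i) * m i) (at s0)"
      by (rule DERIV_chain2[OF ld])
  qed
  hence "((\<lambda>s. \<Sum>i<n. l (c i + (s - s0) * m i)) has_real_derivative (\<Sum>i<n. dl (c i) * m i)) (at s0)"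
    by (auto intro!: DERIV_sum)
  thus ?thesis by (rule DERIV_cmult)
qed

lemma grad_formula:
  assumes nd: "netdim dims L V" and d: "dims 0 = d" and dL: "dims L = 1"
    and z: "\<And>i. i < n \<Longrightarrow> z i \<in> carrier_vec d" and k: "1 \<le> k" "k \<le> L"
    and ld: "\<And>s. (l has_real_derivative dl s) (at s)"
  shows "grad_k l n z d L V k = mat (dims k) (dims (k-1)) (\<lambda>(a,b). (1/real n) *
            (\<Sum>i<n. dl (wprod d L V \<bullet> z i) * (rv L V k $ a * qv V (z i) (k-1) $ b)))"
proof -
  have Vk: "V k \<in> carrier_mat (dims k) (dims (k-1))" using netdimD[OF nd k] .
  have kk: "Suc (k - 1) = k" using k by simp
  show ?thesis
  proof (rule eq_matI)
    fix a b assume ab: "a < dim_row (mat (dims k) (dims (k-1)) (\<lambda>(a,b). (1/real n) *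
            (\<Sum>i<n. dl (wprod d L V \<bullet> z i) * (rv L V k $ a * qv V (z i) (k-1) $ b))))"
       "b < dim_col (mat (dims k) (dims (k-1)) (\<lambda>(a,b). (1/real n) *
            (\<Sum>i<n. dl (wprod d L V \<bullet> z i) * (rv L V k $ a * qv V (z i) (k-1) $ b))))"
    hence ab: "a < dims k" "b < dims (k-1)" by auto
    define m where "m i = rv L V k $ a * qv V (z i) (k-1) $ b" for i
    define c where "c i = wprod d L V \<bullet> z i" for i
    define s0 where "s0 = V k $$ (a,b)"
    have h: "risk l n z d L (V(k := set_entry (V k) a b s)) = (1/real n) * (\<Sum>i<n. l (c i + (s - s0) * m i))" for s
    proof -
      let ?E = "set_entry (V k) a b s"
      have E: "?E \<in> carrier_mat (dims k) (dims (k-1))" using set_entry_carrier[OF Vk] .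
      have nd': "netdim dims L (V(k := ?E))" using netdim_upd[OF nd E] .
      have "wprod d L (V(k := ?E)) \<bullet> z i = c i + (s - s0) * m i" if i: "i < n" for i
      proof -
        have zi: "z i \<in> carrier_vec d" using z i .
        have q: "qv V (z i) (k-1) \<in> carrier_vec (dims (k-1))" using qv_carrier[OF nd, of "z i" "k-1"] zi d k by simp
        have r: "rv L V k \<in> carrier_vec (dims k)" using rv_carrier[OF nd dL k(2)] .
        have "wprod d L (V(k := ?E)) \<bullet> z i = rv L (V(k := ?E)) k \<bullet> qv (V(k := ?E)) (z i) k"
          using p_eq[OF nd' d dL zi k(2)] .
        also have "rv L (V(k := ?E)) k = rv L V k" using rv_upd[of k k L] k by simp
        also have "qv (V(k := ?E)) (z i) k = ?E *\<^sub>v qv V (z i) (k-1)"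
          using qv.simps(2)[of "V(k := ?E)" "z i" "k-1"] qv_upd[of "k-1" k V ?E "z i"] k kk by simp
        also have "rv L V k \<bullet> (?E *\<^sub>v qv V (z i) (k-1)) = rv L V k \<bullet> (V k *\<^sub>v qv V (z i) (k-1)) + (s - s0) * m i"
          unfolding s0_def m_def by (rule set_entry_bilin[OF Vk ab r q])
        also have "V k *\<^sub>v qv V (z i) (k-1) = qv V (z i) k"
          using qv.simps(2)[of V "z i" "k-1"] kk by simp
        also have "rv L V k \<bullet> qv V (z i) k = c i" unfolding c_def using p_eq[OF nd d dL zi k(2)] by simp
        finally show ?thesis .
      qed
      thus ?thesis unfolding risk_def by simp
    qed
    have D: "((\<lambda>s. risk l n z d L (V(k := set_entry (V k) a b s))) has_real_derivative
          (1/real n) * (\<Sum>i<n. dl (c i) * m i)) (at s0)"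
      unfolding h by (rule inner_deriv[OF ld])
    have "grad_k l n z d L V k $$ (a,b) = (THE D. ((\<lambda>s. risk l n z d L (V(k := set_entry (V k) a b s))) has_real_derivative D) (at (V k $$ (a,b))))"
      unfolding grad_k_def using Vk ab by simp
    also have "\<dots> = (1/real n) * (\<Sum>i<n. dl (c i) * m i)"
      unfolding s0_def[symmetric] using D DERIV_unique by blast
    finally show "grad_k l n z d L V k $$ (a,b) = mat (dims k) (dims (k-1)) (\<lambda>(a,b). (1/real n) *
            (\<Sum>i<n. dl (wprod d L V \<bullet> z i) * (rv L V k $ a * qv V (z i) (k-1) $ b))) $$ (a,b)"
      using ab unfolding c_def m_def by simp
  qed (use Vk in \<open>auto simp: grad_k_def\<close>)
qed

definition gm :: "nat \<Rightarrow> nat \<Rightarrow> nat \<Rightarrow> (nat \<Rightarrow> real) \<Rightarrow> real vec \<Rightarrow> (nat \<Rightarrow> real vec) \<Rightarrow> real mat" where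
  "gm r c n u ra q = mat r c (\<lambda>(a,b). (1/real n) * (\<Sum>i<n. u i * (ra $ a * q i $ b)))"

definition finner :: "real mat \<Rightarrow> real mat \<Rightarrow> real" where
  "finner A B = (\<Sum>a<dim_row A. \<Sum>b<dim_col A. A $$ (a,b) * B $$ (a,b))"

lemma gm_carrier[simp]: "gm r c n u ra q \<in> carrier_mat r c" unfolding gm_def by simp

lemma sum3_swap: "(\<Sum>a\<in>A. \<Sum>b\<in>B. \<Sum>i\<in>I. f a b i) = (\<Sum>i\<in>I. \<Sum>a\<in>A. \<Sum>b\<in>B. f a b i)"
proof -
  have "(\<Sum>a\<in>A. \<Sum>b\<in>B. \<Sum>i\<in>I. f a b i) = (\<Sum>a\<in>A. \<Sum>i\<in>I. \<Sum>b\<in>B. f a b i)"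
    by (rule sum.cong[OF refl], rule sum.swap)
  also have "\<dots> = (\<Sum>i\<in>I. \<Sum>a\<in>A. \<Sum>b\<in>B. f a b i)" by (rule sum.swap)
  finally show ?thesis .
qed

lemma sum_prod_split: "(\<Sum>a\<in>A. \<Sum>b\<in>B. (f a :: real) * g b) = (\<Sum>a\<in>A. f a) * (\<Sum>b\<in>B. g b)"
  by (rule sum_product[symmetric])

lemma sum_prod_split2: "(\<Sum>a\<in>A. \<Sum>b\<in>B. K * ((f a :: real) * g b)) = K * ((\<Sum>a\<in>A. f a) * (\<Sum>b\<in>B. g b))"
  unfolding sum_product by (simp add: sum_distrib_left)

lemma gm_bilin: assumes ra: "ra \<in> carrier_vec r" and q: "\<And>i. i < n \<Longrightarrow> q i \<in> carrier_vec c"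
  and y: "y \<in> carrier_vec r" and x: "x \<in> carrier_vec c"
  shows "y \<bullet> (gm r c n u ra q *\<^sub>v x) = (1/real n) * (\<Sum>i<n. u i * ((ra \<bullet> y) * (q i \<bullet> x)))"
proof -
  have "y \<bullet> (gm r c n u ra q *\<^sub>v x) = (\<Sum>a<r. \<Sum>b<c. y $ a * gm r c n u ra q $$ (a,b) * x $ b)"
    by (rule bilin_sum[OF gm_carrier y x])
  also have "\<dots> = (\<Sum>a<r. \<Sum>b<c. \<Sum>i<n. (1/real n) * u i * ((ra $ a * y $ a) * (q i $ b * x $ b)))"
    unfolding gm_def by (intro sum.cong refl) (simp add: sum_distrib_left sum_distrib_right algebra_simps)
  also have "\<dots> = (\<Sum>i<n. \<Sum>a<r. \<Sum>b<c. (1/real n) * u i * ((ra $ a * y $ a) * (q i $ b * x $ b)))"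
    by (rule sum3_swap)
  also have "\<dots> = (\<Sum>i<n. (1/real n) * u i * ((\<Sum>a<r. ra $ a * y $ a) * (\<Sum>b<c. q i $ b * x $ b)))"
    by (intro sum.cong refl) (rule sum_prod_split2)
  also have "\<dots> = (1/real n) * (\<Sum>i<n. u i * ((ra \<bullet> y) * (q i \<bullet> x)))"
    using ra y q x by (simp add: sum_distrib_left scalar_prod_def atLeast0LessThan mult.assoc)
  finally show ?thesis .
qed

lemma gm_finner: assumes A: "A \<in> carrier_mat r c" and ra: "ra \<in> carrier_vec r" and q: "\<And>i. i < n \<Longrightarrow> q i \<in> carrier_vec c"
  shows "finner A (gm r c n u ra q) = (1/real n) * (\<Sum>i<n. u i * (ra \<bullet> (A *\<^sub>v q i)))"
proof -
  have "finner A (gm r c n u ra q) = (\<Sum>a<r. \<Sum>b<c. \<Sum>i<n. (1/real n) * u i * (ra $ a * A $$ (a,b) * q i $ b))"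
  proof -
    have dA: "dim_row A = r" "dim_col A = c" using A by auto
    show ?thesis unfolding finner_def gm_def dA by (intro sum.cong refl) (auto simp: sum_distrib_left algebra_simps)
  qed
  also have "\<dots> = (\<Sum>i<n. \<Sum>a<r. \<Sum>b<c. (1/real n) * u i * (ra $ a * A $$ (a,b) * q i $ b))"
    by (rule sum3_swap)
  also have "\<dots> = (\<Sum>i<n. (1/real n) * u i * (\<Sum>a<r. \<Sum>b<c. ra $ a * A $$ (a,b) * q i $ b))"
    by (intro sum.cong refl) (simp add: sum_distrib_left)
  also have "\<dots> = (1/real n) * (\<Sum>i<n. u i * (ra \<bullet> (A *\<^sub>v q i)))"
    using bilin_sum[OF A ra q] by (simp add: sum_distrib_left mult.assoc)
  finally show ?thesis .
qed

lemma gm_frob: assumes q: "\<And>i. i < n \<Longrightarrow> q i \<in> carrier_vec c" and ra: "ra \<in> carrier_vec r"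
  shows "frob (gm r c n u ra q) ^ 2 \<le> (1/real n)^2 * N ra * (real n * (\<Sum>i<n. (u i)^2 * N (q i)))"
proof -
  have "frob (gm r c n u ra q) ^ 2 = (\<Sum>a<r. \<Sum>b<c. ((1/real n) * (\<Sum>i<n. u i * (ra $ a * q i $ b)))^2)"
    unfolding frob_sq gm_def by simp
  also have "\<dots> = (\<Sum>a<r. \<Sum>b<c. (1/real n)^2 * (ra $ a)^2 * (\<Sum>i<n. u i * q i $ b)^2)"
  proof (intro sum.cong refl)
    fix a b
    have E: "(\<Sum>i<n. u i * (ra $ a * q i $ b)) = ra $ a * (\<Sum>i<n. u i * q i $ b)"
      by (simp add: sum_distrib_left algebra_simps)
    thus "((1/real n) * (\<Sum>i<n. u i * (ra $ a * q i $ b)))^2 = (1/real n)^2 * (ra $ a)^2 * (\<Sum>i<n. u i * q i $ b)^2"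
      by (simp only: E) (simp add: power2_eq_square algebra_simps divide_inverse)
  qed
  also have "\<dots> \<le> (\<Sum>a<r. \<Sum>b<c. (1/real n)^2 * (ra $ a)^2 * (real n * (\<Sum>i<n. (u i * q i $ b)^2)))"
    using sum_sq_le[of "\<lambda>i. u i * q i $ _" "{..<n}"]
    by (intro sum_mono mult_left_mono) auto
  also have "\<dots> = (\<Sum>a<r. \<Sum>b<c. ((1/real n)^2 * real n) * ((ra $ a)^2 * (\<Sum>i<n. (u i)^2 * (q i $ b)^2)))"
    by (intro sum.cong refl) (simp add: power_mult_distrib)
  also have "\<dots> = ((1/real n)^2 * real n) * ((\<Sum>a<r. (ra $ a)^2) * (\<Sum>b<c. \<Sum>i<n. (u i)^2 * (q i $ b)^2))"
    by (rule sum_prod_split2)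
  also have "(\<Sum>b<c. \<Sum>i<n. (u i)^2 * (q i $ b)^2) = (\<Sum>i<n. (u i)^2 * (\<Sum>b<c. (q i $ b)^2))"
    by (subst sum.swap) (simp add: sum_distrib_left)
  also have "(\<Sum>i<n. (u i)^2 * (\<Sum>b<c. (q i $ b)^2)) = (\<Sum>i<n. (u i)^2 * N (q i))"
  proof (intro sum.cong refl)
    fix i assume "i \<in> {..<n}"
    hence "dim_vec (q i) = c" using q by auto
    thus "(u i)^2 * (\<Sum>b<c. (q i $ b)^2) = (u i)^2 * N (q i)"
      by (simp add: scalar_prod_def atLeast0LessThan power2_eq_square)
  qed
  also have "(\<Sum>a<r. (ra $ a)^2) = N ra"
    using ra by (auto simp: scalar_prod_def atLeast0LessThan power2_eq_square)
  finally show ?thesis by (simp add: algebra_simps)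
qed

lemma sum_lin: "(\<Sum>i\<in>I. ((a i::real) - e * b i) * x i) = (\<Sum>i\<in>I. a i * x i) - (\<Sum>i\<in>I. e * (b i * x i))"
  by (simp add: left_diff_distrib sum_subtractf mult.assoc)

lemma N_minus_smult: assumes "v \<in> carrier_vec m" "w \<in> carrier_vec m"
  shows "N (v - e \<cdot>\<^sub>v w) = N v - 2 * e * (v \<bullet> w) + e^2 * N w"
  using assms by (simp add: scalar_prod_def atLeast0LessThan sum.distrib sum_subtractf sum_distrib_left
      power2_eq_square algebra_simps)

lemma upd_mv: fixes A G :: "real mat" assumes A: "A \<in> carrier_mat r c" and G: "G \<in> carrier_mat r c" and x: "x \<in> carrier_vec c"
  shows "(A - e \<cdot>\<^sub>m G) *\<^sub>v x = A *\<^sub>v x - e \<cdot>\<^sub>v (G *\<^sub>v x)"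
  using A G x apply (intro eq_vecI) apply (auto simp: scalar_prod_def atLeast0LessThan sum_distrib_left)
  by (metis (no_types) sum_lin)

lemma upd_tmv: fixes A G :: "real mat" assumes A: "A \<in> carrier_mat r c" and G: "G \<in> carrier_mat r c" and x: "x \<in> carrier_vec r"
  shows "transpose_mat (A - e \<cdot>\<^sub>m G) *\<^sub>v x = transpose_mat A *\<^sub>v x - e \<cdot>\<^sub>v (transpose_mat G *\<^sub>v x)"
  using A G x apply (intro eq_vecI) apply (auto simp: scalar_prod_def atLeast0LessThan sum_distrib_left)
  by (metis (no_types) sum_lin)

lemma upd_N: assumes A: "A \<in> carrier_mat r c" and G: "G \<in> carrier_mat r c" and x: "x \<in> carrier_vec c"
  shows "N ((A - e \<cdot>\<^sub>m G) *\<^sub>v x) = N (A *\<^sub>v x) - 2 * e * ((A *\<^sub>v x) \<bullet> (G *\<^sub>v x)) + e^2 * N (G *\<^sub>v x)"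
  unfolding upd_mv[OF A G x] using A G x by (intro N_minus_smult[of _ r]) auto

lemma upd_NT: assumes A: "A \<in> carrier_mat r c" and G: "G \<in> carrier_mat r c" and x: "x \<in> carrier_vec r"
  shows "N (transpose_mat (A - e \<cdot>\<^sub>m G) *\<^sub>v x) = N (transpose_mat A *\<^sub>v x)
     - 2 * e * ((transpose_mat A *\<^sub>v x) \<bullet> (transpose_mat G *\<^sub>v x)) + e^2 * N (transpose_mat G *\<^sub>v x)"
  unfolding upd_tmv[OF A G x] using A G x by (intro N_minus_smult[of _ c]) auto

lemma upd_frob: assumes A: "A \<in> carrier_mat r c" and G: "G \<in> carrier_mat r c"
  shows "frob (A - e \<cdot>\<^sub>m G) ^ 2 = frob A ^ 2 - 2 * e * finner A G + e^2 * frob G ^ 2"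
proof -
  have "frob (A - e \<cdot>\<^sub>m G) ^ 2 = (\<Sum>a<r. \<Sum>b<c. (A $$ (a,b))^2 - 2 * e * (A $$ (a,b) * G $$ (a,b)) + e^2 * (G $$ (a,b))^2)"
    unfolding frob_sq using A G by (intro sum.cong) (auto simp: power2_eq_square algebra_simps)
  also have "\<dots> = frob A ^ 2 - 2 * e * finner A G + e^2 * frob G ^ 2"
    unfolding frob_sq finner_def using A G by (simp add: sum.distrib sum_subtractf sum_distrib_left)
  finally show ?thesis .
qed

definition ngrad :: "(real \<Rightarrow> real) \<Rightarrow> nat \<Rightarrow> (nat \<Rightarrow> real vec) \<Rightarrow> nat \<Rightarrow> (nat \<Rightarrow> nat) \<Rightarrow> nat
   \<Rightarrow> (nat \<Rightarrow> real mat) \<Rightarrow> nat \<Rightarrow> real mat" where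
  "ngrad dl n z d dims L V k = gm (dims k) (dims (k-1)) n (\<lambda>i. dl (wprod d L V \<bullet> z i)) (rv L V k) (\<lambda>i. qv V (z i) (k-1))"

lemma ngrad_carrier[simp]: "ngrad dl n z d dims L V k \<in> carrier_mat (dims k) (dims (k-1))"
  unfolding ngrad_def by simp

lemma grad_ngrad:
  assumes nd: "netdim dims L V" and d: "dims 0 = d" and dL: "dims L = 1"
    and z: "\<And>i. i < n \<Longrightarrow> z i \<in> carrier_vec d" and k: "1 \<le> k" "k \<le> L"
    and ld: "\<And>s. (l has_real_derivative dl s) (at s)"
  shows "grad_k l n z d L V k = ngrad dl n z d dims L V k"
  using grad_formula[OF nd d dL z k ld] unfolding ngrad_def gm_def by simp

locale net =
  fixes dims :: "nat \<Rightarrow> nat" and L d n :: nat and z :: "nat \<Rightarrow> real vec" and V :: "nat \<Rightarrow> real mat"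
  assumes nd: "netdim dims L V" and d: "dims 0 = d" and dL: "dims L = 1"
    and z: "\<And>i. i < n \<Longrightarrow> z i \<in> carrier_vec d"
begin

lemma Vc: "1 \<le> k \<Longrightarrow> k \<le> L \<Longrightarrow> V k \<in> carrier_mat (dims k) (dims (k-1))"
  using netdimD[OF nd] by auto

lemma qc: "i < n \<Longrightarrow> k \<le> L \<Longrightarrow> qv V (z i) k \<in> carrier_vec (dims k)"
  using qv_carrier[OF nd, of "z i" k] z d by simp

lemma rc: "k \<le> L \<Longrightarrow> rv L V k \<in> carrier_vec (dims k)"
  using rv_carrier[OF nd dL] by simp

lemma q_step: "1 \<le> k \<Longrightarrow> qv V w k = V k *\<^sub>v qv V w (k-1)"
  by (cases k) auto

lemma key1: assumes k: "1 \<le> k" "k < L" and x: "x \<in> carrier_vec (dims k)"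
  shows "(transpose_mat (V k) *\<^sub>v x) \<bullet> (transpose_mat (ngrad dl n z d dims L V k) *\<^sub>v x)
       = (V (Suc k) *\<^sub>v x) \<bullet> (ngrad dl n z d dims L V (Suc k) *\<^sub>v x)"
proof -
  let ?u = "\<lambda>i. dl (wprod d L V \<bullet> z i)"
  have Vk: "V k \<in> carrier_mat (dims k) (dims (k-1))" using Vc k by simp
  have Vk1: "V (Suc k) \<in> carrier_mat (dims (Suc k)) (dims k)" using Vc[of "Suc k"] k by simp
  have rk: "rv L V k \<in> carrier_vec (dims k)" using rc k by simp
  have rk1: "rv L V (Suc k) \<in> carrier_vec (dims (Suc k))" using rc k by simp
  have qk: "\<And>i. i < n \<Longrightarrow> qv V (z i) k \<in> carrier_vec (dims k)" using qc k by simp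
  have qk1: "\<And>i. i < n \<Longrightarrow> qv V (z i) (k-1) \<in> carrier_vec (dims (k-1))" using qc k by simp
  have Vx: "transpose_mat (V k) *\<^sub>v x \<in> carrier_vec (dims (k-1))" using Vk x by simp
  have G: "ngrad dl n z d dims L V k \<in> carrier_mat (dims k) (dims (k-1))" by (rule ngrad_carrier)
  have "(transpose_mat (V k) *\<^sub>v x) \<bullet> (transpose_mat (ngrad dl n z d dims L V k) *\<^sub>v x)
      = (transpose_mat (ngrad dl n z d dims L V k) *\<^sub>v x) \<bullet> (transpose_mat (V k) *\<^sub>v x)"
    using Vk x carrier_matD[OF G] by (intro sp_comm) simp
  also have "\<dots> = x \<bullet> (ngrad dl n z d dims L V k *\<^sub>v (transpose_mat (V k) *\<^sub>v x))"
    by (rule transpose_vec_mult_scalar[OF G Vx x])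
  also have "\<dots> = (1/real n) * (\<Sum>i<n. ?u i * ((rv L V k \<bullet> x) * (qv V (z i) (k-1) \<bullet> (transpose_mat (V k) *\<^sub>v x))))"
    unfolding ngrad_def by (rule gm_bilin[OF rk qk1 x Vx])
  also have "\<dots> = (1/real n) * (\<Sum>i<n. ?u i * ((rv L V k \<bullet> x) * (x \<bullet> qv V (z i) k)))"
  proof -
    have "qv V (z i) (k-1) \<bullet> (transpose_mat (V k) *\<^sub>v x) = x \<bullet> qv V (z i) k" if i: "i < n" for i
    proof -
      have "qv V (z i) (k-1) \<bullet> (transpose_mat (V k) *\<^sub>v x) = (transpose_mat (V k) *\<^sub>v x) \<bullet> qv V (z i) (k-1)"
        using Vk qk1[OF i] by (intro sp_comm) simp
      also have "\<dots> = x \<bullet> (V k *\<^sub>v qv V (z i) (k-1))" by (rule transpose_vec_mult_scalar[OF Vk qk1[OF i] x])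
      also have "V k *\<^sub>v qv V (z i) (k-1) = qv V (z i) k" using q_step k by simp
      finally show ?thesis .
    qed
    thus ?thesis by simp
  qed
  also have "\<dots> = (1/real n) * (\<Sum>i<n. ?u i * ((rv L V (Suc k) \<bullet> (V (Suc k) *\<^sub>v x)) * (qv V (z i) (Suc k - 1) \<bullet> x)))"
  proof -
    have r: "rv L V (Suc k) \<bullet> (V (Suc k) *\<^sub>v x) = rv L V k \<bullet> x"
    proof -
      have "rv L V k = transpose_mat (V (Suc k)) *\<^sub>v rv L V (Suc k)" using rv_step[of "Suc k" L V] k by simp
      hence "rv L V k \<bullet> x = rv L V (Suc k) \<bullet> (V (Suc k) *\<^sub>v x)"
        using transpose_vec_mult_scalar[OF Vk1 x rk1] by simp
      thus ?thesis by simp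
    qed
    have "x \<bullet> qv V (z i) k = qv V (z i) (Suc k - 1) \<bullet> x" if i: "i < n" for i
      using qk[OF i] x by (simp add: sp_comm)
    thus ?thesis using r by simp
  qed
  also have "\<dots> = (V (Suc k) *\<^sub>v x) \<bullet> (ngrad dl n z d dims L V (Suc k) *\<^sub>v x)"
    unfolding ngrad_def using Vk1 x k by (intro gm_bilin[symmetric] rc qc) auto
  finally show ?thesis .
qed

lemma key2: assumes k: "1 \<le> k" "k < L"
  shows "finner (V k) (ngrad dl n z d dims L V k) = finner (V (Suc k)) (ngrad dl n z d dims L V (Suc k))"
proof -
  have Vk: "V k \<in> carrier_mat (dims k) (dims (k-1))" using Vc k by simp
  have Vk1: "V (Suc k) \<in> carrier_mat (dims (Suc k)) (dims k)" using Vc[of "Suc k"] k by simp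
  have rk1: "rv L V (Suc k) \<in> carrier_vec (dims (Suc k))" using rc k by simp
  have qk: "\<And>i. i < n \<Longrightarrow> qv V (z i) k \<in> carrier_vec (dims k)" using qc k by simp
  have "finner (V k) (ngrad dl n z d dims L V k) = (1/real n) * (\<Sum>i<n. dl (wprod d L V \<bullet> z i) * (rv L V k \<bullet> (V k *\<^sub>v qv V (z i) (k-1))))"
    unfolding ngrad_def using k by (intro gm_finner[OF Vk] rc qc) auto
  also have "\<dots> = (1/real n) * (\<Sum>i<n. dl (wprod d L V \<bullet> z i) * (rv L V (Suc k) \<bullet> (V (Suc k) *\<^sub>v qv V (z i) (Suc k - 1))))"
  proof -
    have "rv L V k \<bullet> (V k *\<^sub>v qv V (z i) (k-1)) = rv L V (Suc k) \<bullet> (V (Suc k) *\<^sub>v qv V (z i) (Suc k - 1))" if i: "i < n" for i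
    proof -
      have e1: "V k *\<^sub>v qv V (z i) (k-1) = qv V (z i) k" using q_step k by simp
      have e2: "rv L V k = transpose_mat (V (Suc k)) *\<^sub>v rv L V (Suc k)" using rv_step[of "Suc k" L V] k by simp
      have e3: "(transpose_mat (V (Suc k)) *\<^sub>v rv L V (Suc k)) \<bullet> qv V (z i) k = rv L V (Suc k) \<bullet> (V (Suc k) *\<^sub>v qv V (z i) k)"
        by (rule transpose_vec_mult_scalar[OF Vk1 qk[OF i] rk1])
      show ?thesis unfolding e1 using e3 e2 by simp
    qed
    thus ?thesis by simp
  qed
  also have "\<dots> = finner (V (Suc k)) (ngrad dl n z d dims L V (Suc k))"
  proof -
    have Vk1': "V (Suc k) \<in> carrier_mat (dims (Suc k)) (dims (Suc k - 1))" using Vk1 by simp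
    show ?thesis unfolding ngrad_def using k by (intro gm_finner[symmetric, OF Vk1'] rc qc) auto
  qed
  finally show ?thesis .
qed

lemma key3: assumes k: "1 \<le> k" "k \<le> L" and n: "n \<ge> 1"
  and Gb: "\<And>i. i < n \<Longrightarrow> \<bar>dl (wprod d L V \<bullet> z i)\<bar> \<le> G"
  and Mb: "\<And>i. i < n \<Longrightarrow> N (qv V (z i) (k-1)) \<le> M"
  shows "frob (ngrad dl n z d dims L V k) ^ 2 \<le> G^2 * N (rv L V k) * M"
proof -
  let ?u = "\<lambda>i. dl (wprod d L V \<bullet> z i)"
  have "frob (ngrad dl n z d dims L V k) ^ 2 \<le> (1/real n)^2 * N (rv L V k) * (real n * (\<Sum>i<n. (?u i)^2 * N (qv V (z i) (k-1))))"
    unfolding ngrad_def using k by (intro gm_frob qc rc) auto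
  also have "\<dots> \<le> (1/real n)^2 * N (rv L V k) * (real n * (\<Sum>i<n. G^2 * M))"
  proof -
    have "(?u i)^2 * N (qv V (z i) (k-1)) \<le> G^2 * M" if i: "i < n" for i
    proof (rule mult_mono)
      have "\<bar>?u i\<bar>^2 \<le> G^2" by (rule power_mono[OF Gb[OF i] abs_ge_zero])
      thus "(?u i)^2 \<le> G^2" by simp
      show "N (qv V (z i) (k-1)) \<le> M" using Mb[OF i] .
      show "0 \<le> G^2" by simp
      show "0 \<le> N (qv V (z i) (k-1))" by (rule N_nonneg)
    qed
    hence "(\<Sum>i<n. (?u i)^2 * N (qv V (z i) (k-1))) \<le> (\<Sum>i<n. G^2 * M)" by (intro sum_mono) auto
    thus ?thesis using N_nonneg[of "rv L V k"] by (intro mult_left_mono) auto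
  qed
  also have "\<dots> = G^2 * N (rv L V k) * M" using n by (simp add: power2_eq_square field_simps)
  finally show ?thesis .
qed

end

fun Qp :: "(nat \<Rightarrow> real mat) \<Rightarrow> (nat \<Rightarrow> real mat) \<Rightarrow> real vec \<Rightarrow> real \<Rightarrow> nat \<Rightarrow> real vec" where
  "Qp V D z \<tau> 0 = z"
| "Qp V D z \<tau> (Suc j) = (V (Suc j) + \<tau> \<cdot>\<^sub>m D (Suc j)) *\<^sub>v Qp V D z \<tau> j"

fun Qd :: "(nat \<Rightarrow> real mat) \<Rightarrow> (nat \<Rightarrow> real mat) \<Rightarrow> real vec \<Rightarrow> real \<Rightarrow> nat \<Rightarrow> real vec" where
  "Qd V D z \<tau> 0 = 0\<^sub>v (dim_vec z)"
| "Qd V D z \<tau> (Suc j) = D (Suc j) *\<^sub>v Qp V D z \<tau> j + (V (Suc j) + \<tau> \<cdot>\<^sub>m D (Suc j)) *\<^sub>v Qd V D z \<tau> j"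

locale path =
  fixes dims :: "nat \<Rightarrow> nat" and L :: nat and V D :: "nat \<Rightarrow> real mat"
  assumes Vc: "\<And>k. 1 \<le> k \<Longrightarrow> k \<le> L \<Longrightarrow> V k \<in> carrier_mat (dims k) (dims (k-1))"
    and Dc: "\<And>k. 1 \<le> k \<Longrightarrow> k \<le> L \<Longrightarrow> D k \<in> carrier_mat (dims k) (dims (k-1))"
begin

lemma Vc': "j < L \<Longrightarrow> V (Suc j) \<in> carrier_mat (dims (Suc j)) (dims j)" using Vc[of "Suc j"] by simp
lemma Dc': "j < L \<Longrightarrow> D (Suc j) \<in> carrier_mat (dims (Suc j)) (dims j)" using Dc[of "Suc j"] by simp
lemma Mc': "j < L \<Longrightarrow> V (Suc j) + t \<cdot>\<^sub>m D (Suc j) \<in> carrier_mat (dims (Suc j)) (dims j)"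
  using Vc' Dc' by simp

lemma Qp_c: "z \<in> carrier_vec (dims 0) \<Longrightarrow> j \<le> L \<Longrightarrow> Qp V D z t j \<in> carrier_vec (dims j)"
proof (induction j)
  case (Suc j) thus ?case using Mc'[of j t] by simp
qed simp

lemma Qd_c: "z \<in> carrier_vec (dims 0) \<Longrightarrow> j \<le> L \<Longrightarrow> Qd V D z t j \<in> carrier_vec (dims j)"
proof (induction j)
  case (Suc j)
  have "D (Suc j) *\<^sub>v Qp V D z t j \<in> carrier_vec (dims (Suc j))"
    using Dc'[of j] Suc.prems by (intro carrier_vecI) auto
  moreover have "(V (Suc j) + t \<cdot>\<^sub>m D (Suc j)) *\<^sub>v Qd V D z t j \<in> carrier_vec (dims (Suc j))"
    using Mc'[of j t] Suc by simp
  ultimately show ?case by simp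
qed simp

lemma Qp_deriv: assumes z: "z \<in> carrier_vec (dims 0)"
  shows "j \<le> L \<Longrightarrow> a < dims j \<Longrightarrow> ((\<lambda>t. Qp V D z t j $ a) has_real_derivative (Qd V D z t j $ a)) (at t)"
proof (induction j arbitrary: a)
  case 0 thus ?case using z by simp
next
  case (Suc j)
  have j: "j < L" using Suc by simp
  have Vj: "V (Suc j) \<in> carrier_mat (dims (Suc j)) (dims j)" using Vc'[OF j] .
  have Dj: "D (Suc j) \<in> carrier_mat (dims (Suc j)) (dims j)" using Dc'[OF j] .
  have eq: "Qp V D z s (Suc j) $ a = (\<Sum>b<dims j. (V (Suc j) $$ (a,b) + s * D (Suc j) $$ (a,b)) * Qp V D z s j $ b)" for s
  proof -
    have "Qp V D z s (Suc j) $ a = (\<Sum>b<dims j. (V (Suc j) + s \<cdot>\<^sub>m D (Suc j)) $$ (a,b) * Qp V D z s j $ b)"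
      using mv_index[OF Mc'[OF j] Qp_c[OF z, of j s] Suc.prems(2)] j by simp
    also have "\<dots> = (\<Sum>b<dims j. (V (Suc j) $$ (a,b) + s * D (Suc j) $$ (a,b)) * Qp V D z s j $ b)"
      using Vj Dj Suc.prems(2) by (intro sum.cong refl) auto
    finally show ?thesis .
  qed
  have "((\<lambda>s. \<Sum>b<dims j. (V (Suc j) $$ (a,b) + s * D (Suc j) $$ (a,b)) * Qp V D z s j $ b) has_real_derivative
       (\<Sum>b<dims j. D (Suc j) $$ (a,b) * Qp V D z t j $ b + (V (Suc j) $$ (a,b) + t * D (Suc j) $$ (a,b)) * Qd V D z t j $ b)) (at t)"
  proof (rule DERIV_sum)
    fix b assume "b \<in> {..<dims j}"
    hence IH: "((\<lambda>s. Qp V D z s j $ b) has_real_derivative Qd V D z t j $ b) (at t)" using Suc j by simp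
    have lin: "((\<lambda>s. V (Suc j) $$ (a,b) + s * D (Suc j) $$ (a,b)) has_real_derivative D (Suc j) $$ (a,b)) (at t)"
      by (auto intro!: derivative_eq_intros)
    show "((\<lambda>s. (V (Suc j) $$ (a,b) + s * D (Suc j) $$ (a,b)) * Qp V D z s j $ b) has_real_derivative
        D (Suc j) $$ (a,b) * Qp V D z t j $ b + (V (Suc j) $$ (a,b) + t * D (Suc j) $$ (a,b)) * Qd V D z t j $ b) (at t)"
      using DERIV_mult[OF lin IH] by (simp add: algebra_simps)
  qed
  moreover have "(\<Sum>b<dims j. D (Suc j) $$ (a,b) * Qp V D z t j $ b + (V (Suc j) $$ (a,b) + t * D (Suc j) $$ (a,b)) * Qd V D z t j $ b)
      = Qd V D z t (Suc j) $ a"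
  proof -
    have "Qd V D z t (Suc j) $ a = (D (Suc j) *\<^sub>v Qp V D z t j) $ a + ((V (Suc j) + t \<cdot>\<^sub>m D (Suc j)) *\<^sub>v Qd V D z t j) $ a"
      using Suc.prems(2) Vj Dj by simp
    also have "(D (Suc j) *\<^sub>v Qp V D z t j) $ a = (\<Sum>b<dims j. D (Suc j) $$ (a,b) * Qp V D z t j $ b)"
      using mv_index[OF Dj Qp_c[OF z, of j t] Suc.prems(2)] j by simp
    also have "((V (Suc j) + t \<cdot>\<^sub>m D (Suc j)) *\<^sub>v Qd V D z t j) $ a = (\<Sum>b<dims j. (V (Suc j) + t \<cdot>\<^sub>m D (Suc j)) $$ (a,b) * Qd V D z t j $ b)"
      using mv_index[OF Mc'[OF j] Qd_c[OF z, of j t] Suc.prems(2)] j by simp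
    also have "\<dots> = (\<Sum>b<dims j. (V (Suc j) $$ (a,b) + t * D (Suc j) $$ (a,b)) * Qd V D z t j $ b)"
      using Vj Dj Suc.prems(2) by (intro sum.cong refl) auto
    finally show ?thesis by (simp add: sum.distrib)
  qed
  ultimately show ?case unfolding eq by simp
qed

end

lemma N_add: assumes "dim_vec a = dim_vec b" shows "N (a + b) = N a + 2 * (a \<bullet> b) + N b"
  using assms by (simp add: scalar_prod_def atLeast0LessThan sum.distrib sum_distrib_left algebra_simps)

lemma vnorm_add: assumes "dim_vec a = dim_vec b" shows "vnorm (a + b) \<le> vnorm a + vnorm b"
proof -
  have "N (a + b) \<le> (vnorm a + vnorm b)^2"
  proof -
    have "a \<bullet> b \<le> vnorm a * vnorm b" using cs_abs[OF assms] unfolding vnorm_def by simp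
    thus ?thesis unfolding N_add[OF assms] power2_sum vnorm_sq by simp
  qed
  hence "sqrt (N (a + b)) \<le> sqrt ((vnorm a + vnorm b)^2)" by (rule real_sqrt_le_mono)
  thus ?thesis unfolding vnorm_def[of "a + b"] using vnorm_nonneg[of a] vnorm_nonneg[of b] by simp
qed

lemma vnorm_smult: "vnorm (c \<cdot>\<^sub>v a) = \<bar>c\<bar> * vnorm a"
  unfolding vnorm_def N_smult by (simp add: real_sqrt_mult)

lemma vnorm_component: assumes "i < dim_vec v" shows "\<bar>v $ i\<bar> \<le> vnorm v"
proof -
  have "(v $ i)^2 \<le> N v" unfolding scalar_prod_def using assms
    by (subst power2_eq_square, intro member_le_sum) auto
  hence "sqrt ((v $ i)^2) \<le> sqrt (N v)" by (rule real_sqrt_le_mono)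
  thus ?thesis unfolding vnorm_def by simp
qed

lemma mv_plus: fixes A B :: "real mat" assumes A: "A \<in> carrier_mat r c" and B: "B \<in> carrier_mat r c" and x: "x \<in> carrier_vec c"
  shows "(A + t \<cdot>\<^sub>m B) *\<^sub>v x = A *\<^sub>v x + t \<cdot>\<^sub>v (B *\<^sub>v x)"
  using A B x by (intro eq_vecI)
    (auto simp: scalar_prod_def atLeast0LessThan sum.distrib sum_distrib_left algebra_simps)

lemma sum_eq_pw: fixes f g h k :: "nat \<Rightarrow> real"
  assumes "\<And>j. j < c \<Longrightarrow> f j - g j = h j + t * k j"
  shows "(\<Sum>j<c. f j) - (\<Sum>j<c. g j) = (\<Sum>j<c. h j) + t * (\<Sum>j<c. k j)"
proof -
  have "(\<Sum>j<c. f j) - (\<Sum>j<c. g j) = (\<Sum>j<c. f j - g j)" by (simp add: sum_subtractf)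
  also have "\<dots> = (\<Sum>j<c. h j + t * k j)" using assms by (intro sum.cong) auto
  finally show ?thesis by (simp add: sum.distrib sum_distrib_left)
qed

lemma sum_eq_pw2: fixes f1 f2 g1 g2 h1 h2 k :: "nat \<Rightarrow> real"
  assumes "\<And>j. j < c \<Longrightarrow> (f1 j + f2 j) - (g1 j + g2 j) = h1 j + h2 j + t * k j"
  shows "((\<Sum>j<c. f1 j) + (\<Sum>j<c. f2 j)) - ((\<Sum>j<c. g1 j) + (\<Sum>j<c. g2 j)) = (\<Sum>j<c. h1 j) + (\<Sum>j<c. h2 j) + t * (\<Sum>j<c. k j)"
proof -
  have "((\<Sum>j<c. f1 j) + (\<Sum>j<c. f2 j)) - ((\<Sum>j<c. g1 j) + (\<Sum>j<c. g2 j)) = (\<Sum>j<c. (f1 j + f2 j) - (g1 j + g2 j))"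
    by (simp add: sum_subtractf sum.distrib)
  also have "\<dots> = (\<Sum>j<c. h1 j + h2 j + t * k j)" using assms by (intro sum.cong) auto
  finally show ?thesis by (simp add: sum.distrib sum_distrib_left)
qed

lemma I1: fixes A B :: "real mat" assumes A: "A \<in> carrier_mat r c" and B: "B \<in> carrier_mat r c"
  and a: "a \<in> carrier_vec c" and b: "b \<in> carrier_vec c"
  shows "(A + t \<cdot>\<^sub>m B) *\<^sub>v a - A *\<^sub>v b = (A + t \<cdot>\<^sub>m B) *\<^sub>v (a - b) + t \<cdot>\<^sub>v (B *\<^sub>v b)"
proof (rule eq_vecI)
  fix i assume "i < dim_vec ((A + t \<cdot>\<^sub>m B) *\<^sub>v (a - b) + t \<cdot>\<^sub>v (B *\<^sub>v b))"
  hence i: "i < r" using A B by simp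
  have M: "A + t \<cdot>\<^sub>m B \<in> carrier_mat r c" using A B by simp
  have ab: "a - b \<in> carrier_vec c" using a b by simp
  show "((A + t \<cdot>\<^sub>m B) *\<^sub>v a - A *\<^sub>v b) $ i = ((A + t \<cdot>\<^sub>m B) *\<^sub>v (a - b) + t \<cdot>\<^sub>v (B *\<^sub>v b)) $ i"
    using i A B a b mv_index[OF M a i] mv_index[OF A b i] mv_index[OF M ab i] mv_index[OF B b i]
    by (simp del: index_mult_mat_vec) (rule sum_eq_pw, auto simp: algebra_simps)
qed (use A B in auto)

lemma I2: fixes A B :: "real mat" assumes A: "A \<in> carrier_mat r c" and B: "B \<in> carrier_mat r c"
  and p: "p \<in> carrier_vec c" and p0: "p0 \<in> carrier_vec c" and e: "e \<in> carrier_vec c" and e0: "e0 \<in> carrier_vec c"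
  shows "(B *\<^sub>v p + (A + t \<cdot>\<^sub>m B) *\<^sub>v e) - (B *\<^sub>v p0 + A *\<^sub>v e0)
      = B *\<^sub>v (p - p0) + (A + t \<cdot>\<^sub>m B) *\<^sub>v (e - e0) + t \<cdot>\<^sub>v (B *\<^sub>v e0)"
proof (rule eq_vecI)
  fix i assume "i < dim_vec (B *\<^sub>v (p - p0) + (A + t \<cdot>\<^sub>m B) *\<^sub>v (e - e0) + t \<cdot>\<^sub>v (B *\<^sub>v e0))"
  hence i: "i < r" using B by simp
  have M: "A + t \<cdot>\<^sub>m B \<in> carrier_mat r c" using A B by simp
  have pp: "p - p0 \<in> carrier_vec c" using p p0 by simp
  have ee: "e - e0 \<in> carrier_vec c" using e e0 by simp
  show "((B *\<^sub>v p + (A + t \<cdot>\<^sub>m B) *\<^sub>v e) - (B *\<^sub>v p0 + A *\<^sub>v e0)) $ i = (B *\<^sub>v (p - p0) + (A + t \<cdot>\<^sub>m B) *\<^sub>v (e - e0) + t \<cdot>\<^sub>v (B *\<^sub>v e0)) $ i"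
    using i A B mv_index[OF B p i] mv_index[OF M e i] mv_index[OF B p0 i] mv_index[OF A e0 i]
      mv_index[OF B pp i] mv_index[OF M ee i] mv_index[OF B e0 i] p p0 e e0
    by (simp del: index_mult_mat_vec) (rule sum_eq_pw2, auto simp: algebra_simps)
qed (use A B in auto)

lemma le_mult_trans: "(a::real) \<le> f * x \<Longrightarrow> x \<le> B \<Longrightarrow> 0 \<le> f \<Longrightarrow> a \<le> f * B"
  by (meson mult_left_mono order_trans)

lemma vnorm_add3: "dim_vec a = dim_vec b \<Longrightarrow> dim_vec c = dim_vec b \<Longrightarrow> vnorm (a + b + c) \<le> vnorm a + vnorm b + vnorm c"
  using vnorm_add[of "a + b" c] vnorm_add[of a b] by simp

lemma vnorm_zero[simp]: "vnorm (0\<^sub>v n) = 0" unfolding vnorm_def by simp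

locale pathb = path +
  fixes R :: real and z :: "real vec"
  assumes R1: "R \<ge> 1"
    and Vb: "\<And>k. 1 \<le> k \<Longrightarrow> k \<le> L \<Longrightarrow> frob (V k) \<le> R - 1"
    and Db: "\<And>k. 1 \<le> k \<Longrightarrow> k \<le> L \<Longrightarrow> frob (D k) \<le> 1"
    and zc: "z \<in> carrier_vec (dims 0)"
    and zb: "vnorm z \<le> 1"
begin

definition S :: "nat \<Rightarrow> real" where "S j = (\<Sum>k\<in>{1..j}. frob (D k))"
definition P :: "nat \<Rightarrow> real" where "P j = R^j / R"

lemma P_eq: "P j = R^j / R" by (simp add: P_def)
lemma S_eq: "S j = (\<Sum>k\<in>{1..j}. frob (D k))" by (simp add: S_def)
lemma S_Suc: "S (Suc j) = S j + frob (D (Suc j))" unfolding S_def by simp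
lemma S_nonneg: "S j \<ge> 0" unfolding S_def by (auto intro!: sum_nonneg frob_nonneg)
lemma P_Suc: "P (Suc j) = R * P j" unfolding P_def by simp
lemma P_Suc': "P (Suc j) = R ^ j" unfolding P_def using R1 by simp
lemma P_nonneg: "P j \<ge> 0" unfolding P_def using R1 by simp
lemma P_mono: "P j \<le> P (Suc j)" unfolding P_Suc using P_nonneg[of j] R1 by (simp add: mult_le_cancel_right1)

lemma M0: assumes j: "j < L" and x: "x \<in> carrier_vec (dims j)"
  shows "(V (Suc j) + 0 \<cdot>\<^sub>m D (Suc j)) *\<^sub>v x = V (Suc j) *\<^sub>v x"
proof -
  have V: "V (Suc j) \<in> carrier_mat (dims (Suc j)) (dims j)" using Vc'[OF j] .
  have D: "D (Suc j) \<in> carrier_mat (dims (Suc j)) (dims j)" using Dc'[OF j] .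
  have "(V (Suc j) + 0 \<cdot>\<^sub>m D (Suc j)) *\<^sub>v x = V (Suc j) *\<^sub>v x + 0 \<cdot>\<^sub>v (D (Suc j) *\<^sub>v x)"
    by (rule mv_plus[OF V D x])
  also have "\<dots> = V (Suc j) *\<^sub>v x" using V D by (intro eq_vecI) auto
  finally show ?thesis .
qed

lemma opM: assumes j: "j < L" and t: "0 \<le> t" "t \<le> 1" and x: "x \<in> carrier_vec (dims j)"
  shows "vnorm ((V (Suc j) + t \<cdot>\<^sub>m D (Suc j)) *\<^sub>v x) \<le> R * vnorm x"
proof -
  have V: "V (Suc j) \<in> carrier_mat (dims (Suc j)) (dims j)" using Vc'[OF j] .
  have D: "D (Suc j) \<in> carrier_mat (dims (Suc j)) (dims j)" using Dc'[OF j] .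
  have "vnorm ((V (Suc j) + t \<cdot>\<^sub>m D (Suc j)) *\<^sub>v x) = vnorm (V (Suc j) *\<^sub>v x + t \<cdot>\<^sub>v (D (Suc j) *\<^sub>v x))"
    unfolding mv_plus[OF V D x] ..
  also have "\<dots> \<le> vnorm (V (Suc j) *\<^sub>v x) + vnorm (t \<cdot>\<^sub>v (D (Suc j) *\<^sub>v x))"
    using V D by (intro vnorm_add) simp
  also have "\<dots> = vnorm (V (Suc j) *\<^sub>v x) + t * vnorm (D (Suc j) *\<^sub>v x)" using t by (simp add: vnorm_smult)
  also have "\<dots> \<le> frob (V (Suc j)) * vnorm x + t * (frob (D (Suc j)) * vnorm x)"
    using vnorm_mv_le[OF V x] vnorm_mv_le[OF D x] t by (intro add_mono mult_left_mono) auto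
  also have "\<dots> \<le> (R - 1) * vnorm x + 1 * (1 * vnorm x)"
    using Vb[of "Suc j"] Db[of "Suc j"] j t vnorm_nonneg[of x] frob_nonneg[of "D (Suc j)"]
    by (intro add_mono mult_right_mono mult_mono) auto
  finally show ?thesis by (simp add: algebra_simps)
qed

lemma E1: assumes t: "0 \<le> t" "t \<le> 1" shows "j \<le> L \<Longrightarrow> vnorm (Qp V D z t j) \<le> R ^ j"
proof (induction j)
  case 0 thus ?case using zb by simp
next
  case (Suc j)
  have "vnorm (Qp V D z t (Suc j)) \<le> R * vnorm (Qp V D z t j)"
    using opM[OF _ t Qp_c[OF zc]] Suc.prems by simp
  also have "\<dots> \<le> R * R ^ j" using Suc R1 by (intro mult_left_mono) auto
  finally show ?case by simp
qed

lemma E2: assumes t: "0 \<le> t" "t \<le> 1" shows "j \<le> L \<Longrightarrow> vnorm (Qp V D z t j - Qp V D z 0 j) \<le> t * P j * S j"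
proof (induction j)
  case 0 thus ?case using zc by (simp add: S_def)
next
  case (Suc j)
  have j: "j < L" using Suc by simp
  have V: "V (Suc j) \<in> carrier_mat (dims (Suc j)) (dims j)" using Vc'[OF j] .
  have D: "D (Suc j) \<in> carrier_mat (dims (Suc j)) (dims j)" using Dc'[OF j] .
  have a: "Qp V D z t j \<in> carrier_vec (dims j)" and b: "Qp V D z 0 j \<in> carrier_vec (dims j)" using Qp_c[OF zc] j by auto
  have "Qp V D z t (Suc j) - Qp V D z 0 (Suc j) = (V (Suc j) + t \<cdot>\<^sub>m D (Suc j)) *\<^sub>v Qp V D z t j - V (Suc j) *\<^sub>v Qp V D z 0 j"
    using M0[OF j b] by simp
  also have "\<dots> = (V (Suc j) + t \<cdot>\<^sub>m D (Suc j)) *\<^sub>v (Qp V D z t j - Qp V D z 0 j) + t \<cdot>\<^sub>v (D (Suc j) *\<^sub>v Qp V D z 0 j)"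
    by (rule I1[OF V D a b])
  finally have eq: "Qp V D z t (Suc j) - Qp V D z 0 (Suc j) = \<dots>" .
  have "vnorm (Qp V D z t (Suc j) - Qp V D z 0 (Suc j)) \<le>
     vnorm ((V (Suc j) + t \<cdot>\<^sub>m D (Suc j)) *\<^sub>v (Qp V D z t j - Qp V D z 0 j)) + vnorm (t \<cdot>\<^sub>v (D (Suc j) *\<^sub>v Qp V D z 0 j))"
    unfolding eq using V D by (intro vnorm_add) simp
  also have "\<dots> \<le> R * (t * P j * S j) + t * (frob (D (Suc j)) * R ^ j)"
  proof (rule add_mono)
    show "vnorm ((V (Suc j) + t \<cdot>\<^sub>m D (Suc j)) *\<^sub>v (Qp V D z t j - Qp V D z 0 j)) \<le> R * (t * P j * S j)"
    proof -
      have IHj: "vnorm (Qp V D z t j - Qp V D z 0 j) \<le> t * P j * S j" using Suc.IH j by simp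
      have "vnorm ((V (Suc j) + t \<cdot>\<^sub>m D (Suc j)) *\<^sub>v (Qp V D z t j - Qp V D z 0 j)) \<le> R * vnorm (Qp V D z t j - Qp V D z 0 j)"
        by (rule opM[OF j t]) (use a b in simp)
      from le_mult_trans[OF this IHj] R1 show ?thesis by simp
    qed
    have "vnorm (D (Suc j) *\<^sub>v Qp V D z 0 j) \<le> frob (D (Suc j)) * vnorm (Qp V D z 0 j)" by (rule vnorm_mv_le[OF D b])
    also have "\<dots> \<le> frob (D (Suc j)) * R ^ j" using E1[of 0 j] j frob_nonneg by (intro mult_left_mono) auto
    finally have "t * vnorm (D (Suc j) *\<^sub>v Qp V D z 0 j) \<le> t * (frob (D (Suc j)) * R ^ j)"
      using t(1) by (rule mult_left_mono)
    thus "vnorm (t \<cdot>\<^sub>v (D (Suc j) *\<^sub>v Qp V D z 0 j)) \<le> t * (frob (D (Suc j)) * R ^ j)"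
      using t(1) by (simp add: vnorm_smult)
  qed
  also have "\<dots> = t * P (Suc j) * S (Suc j)" unfolding S_Suc P_Suc using P_Suc'[of j] unfolding P_Suc
    by (simp add: algebra_simps)
  finally show ?case .
qed

lemma E3: assumes t: "0 \<le> t" "t \<le> 1" shows "j \<le> L \<Longrightarrow> vnorm (Qd V D z t j) \<le> P j * S j"
proof (induction j)
  case 0 thus ?case by (simp add: S_def)
next
  case (Suc j)
  have j: "j < L" using Suc by simp
  have D: "D (Suc j) \<in> carrier_mat (dims (Suc j)) (dims j)" using Dc'[OF j] .
  have M: "V (Suc j) + t \<cdot>\<^sub>m D (Suc j) \<in> carrier_mat (dims (Suc j)) (dims j)" using Mc'[OF j] .
  have a: "Qp V D z t j \<in> carrier_vec (dims j)" and e: "Qd V D z t j \<in> carrier_vec (dims j)"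
    using Qp_c[OF zc] Qd_c[OF zc] j by auto
  have "vnorm (Qd V D z t (Suc j)) \<le> vnorm (D (Suc j) *\<^sub>v Qp V D z t j) + vnorm ((V (Suc j) + t \<cdot>\<^sub>m D (Suc j)) *\<^sub>v Qd V D z t j)"
    using D M by (simp add: vnorm_add)
  also have "\<dots> \<le> frob (D (Suc j)) * R ^ j + R * (P j * S j)"
  proof (rule add_mono)
    show "vnorm (D (Suc j) *\<^sub>v Qp V D z t j) \<le> frob (D (Suc j)) * R ^ j"
      using vnorm_mv_le[OF D a] E1[OF t, of j] j frob_nonneg[of "D (Suc j)"]
      by (meson less_imp_le_nat mult_left_mono order_trans)
    show "vnorm ((V (Suc j) + t \<cdot>\<^sub>m D (Suc j)) *\<^sub>v Qd V D z t j) \<le> R * (P j * S j)"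
    proof -
      have IHj: "vnorm (Qd V D z t j) \<le> P j * S j" using Suc.IH j by simp
      from le_mult_trans[OF opM[OF j t e] IHj] R1 show ?thesis by simp
    qed
  qed
  also have "\<dots> = P (Suc j) * S (Suc j)" unfolding S_Suc P_Suc using P_Suc'[of j] unfolding P_Suc
    by (simp add: algebra_simps)
  finally show ?case .
qed

lemma E4: assumes t: "0 \<le> t" "t \<le> 1" shows "j \<le> L \<Longrightarrow> vnorm (Qd V D z t j - Qd V D z 0 j) \<le> 2 * t * P j * (S j)^2"
proof (induction j)
  case 0 thus ?case using zc by (simp add: S_def)
next
  case (Suc j)
  have j: "j < L" using Suc by simp
  have V: "V (Suc j) \<in> carrier_mat (dims (Suc j)) (dims j)" using Vc'[OF j] .
  have D: "D (Suc j) \<in> carrier_mat (dims (Suc j)) (dims j)" using Dc'[OF j] .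
  have p: "Qp V D z t j \<in> carrier_vec (dims j)" and p0: "Qp V D z 0 j \<in> carrier_vec (dims j)"
    and e: "Qd V D z t j \<in> carrier_vec (dims j)" and e0: "Qd V D z 0 j \<in> carrier_vec (dims j)"
    using Qp_c[OF zc] Qd_c[OF zc] j by auto
  let ?M = "V (Suc j) + t \<cdot>\<^sub>m D (Suc j)"
  define \<delta> where "\<delta> = frob (D (Suc j))"
  have \<delta>: "0 \<le> \<delta>" "\<delta> \<le> 1" unfolding \<delta>_def using frob_nonneg Db[of "Suc j"] j by auto
  have "Qd V D z t (Suc j) - Qd V D z 0 (Suc j) = (D (Suc j) *\<^sub>v Qp V D z t j + ?M *\<^sub>v Qd V D z t j) - (D (Suc j) *\<^sub>v Qp V D z 0 j + V (Suc j) *\<^sub>v Qd V D z 0 j)"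
    using M0[OF j e0] by simp
  also have "\<dots> = D (Suc j) *\<^sub>v (Qp V D z t j - Qp V D z 0 j) + ?M *\<^sub>v (Qd V D z t j - Qd V D z 0 j) + t \<cdot>\<^sub>v (D (Suc j) *\<^sub>v Qd V D z 0 j)"
    by (rule I2[OF V D p p0 e e0])
  finally have eq: "Qd V D z t (Suc j) - Qd V D z 0 (Suc j) = \<dots>" .
  have "vnorm (Qd V D z t (Suc j) - Qd V D z 0 (Suc j)) \<le>
      vnorm (D (Suc j) *\<^sub>v (Qp V D z t j - Qp V D z 0 j)) + vnorm (?M *\<^sub>v (Qd V D z t j - Qd V D z 0 j))
      + vnorm (t \<cdot>\<^sub>v (D (Suc j) *\<^sub>v Qd V D z 0 j))"
    unfolding eq using V D by (intro vnorm_add3) auto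
  also have "\<dots> \<le> \<delta> * (t * P j * S j) + R * (2 * t * P j * (S j)^2) + t * (\<delta> * (P j * S j))"
  proof (intro add_mono)
    show "vnorm (D (Suc j) *\<^sub>v (Qp V D z t j - Qp V D z 0 j)) \<le> \<delta> * (t * P j * S j)"
    proof -
      have "vnorm (D (Suc j) *\<^sub>v (Qp V D z t j - Qp V D z 0 j)) \<le> \<delta> * vnorm (Qp V D z t j - Qp V D z 0 j)"
        unfolding \<delta>_def by (rule vnorm_mv_le[OF D]) (use p p0 in simp)
      from le_mult_trans[OF this E2[OF t, of j]] j \<delta> show ?thesis by simp
    qed
    show "vnorm (?M *\<^sub>v (Qd V D z t j - Qd V D z 0 j)) \<le> R * (2 * t * P j * (S j)^2)"
    proof -
      have IHj: "vnorm (Qd V D z t j - Qd V D z 0 j) \<le> 2 * t * P j * (S j)^2" using Suc.IH j by simp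
      have "vnorm (?M *\<^sub>v (Qd V D z t j - Qd V D z 0 j)) \<le> R * vnorm (Qd V D z t j - Qd V D z 0 j)"
        by (rule opM[OF j t]) (use e e0 in simp)
      from le_mult_trans[OF this IHj] R1 show ?thesis by simp
    qed
    have "vnorm (D (Suc j) *\<^sub>v Qd V D z 0 j) \<le> \<delta> * (P j * S j)"
    proof -
      have "vnorm (D (Suc j) *\<^sub>v Qd V D z 0 j) \<le> \<delta> * vnorm (Qd V D z 0 j)"
        unfolding \<delta>_def by (rule vnorm_mv_le[OF D e0])
      from le_mult_trans[OF this E3[of 0 j]] j \<delta> show ?thesis by simp
    qed
    hence "t * vnorm (D (Suc j) *\<^sub>v Qd V D z 0 j) \<le> t * (\<delta> * (P j * S j))" using t(1) by (rule mult_left_mono)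
    thus "vnorm (t \<cdot>\<^sub>v (D (Suc j) *\<^sub>v Qd V D z 0 j)) \<le> t * (\<delta> * (P j * S j))"
      using t(1) by (simp add: vnorm_smult)
  qed
  also have "\<dots> = 2 * t * (P j * \<delta> * S j) + 2 * t * (R * P j) * (S j)^2" by (simp add: algebra_simps)
  also have "\<dots> \<le> 2 * t * (P (Suc j) * \<delta> * S j) + 2 * t * P (Suc j) * (S j)^2"
    using P_mono[of j] \<delta> S_nonneg[of j] t P_nonneg[of "Suc j"] unfolding P_Suc
    by (intro add_mono mult_left_mono mult_right_mono) (auto simp: P_Suc[symmetric])
  also have "\<dots> \<le> 2 * t * P (Suc j) * (S (Suc j))^2"
  proof -
    have "\<delta> * S j + (S j)^2 \<le> (S j + \<delta>)^2" using \<delta> S_nonneg[of j] by (simp add: power2_eq_square algebra_simps)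
    hence "2 * t * P (Suc j) * (\<delta> * S j + (S j)^2) \<le> 2 * t * P (Suc j) * (S j + \<delta>)^2"
      using t P_nonneg[of "Suc j"] by (intro mult_left_mono) auto
    thus ?thesis unfolding S_Suc \<delta>_def[symmetric] by (simp add: algebra_simps)
  qed
  finally show ?case .
qed

end

context path begin

lemma Qp0: "z \<in> carrier_vec (dims 0) \<Longrightarrow> j \<le> L \<Longrightarrow> Qp V D z 0 j = qv V z j"
proof (induction j)
  case (Suc j)
  have j: "j < L" using Suc by simp
  have V: "V (Suc j) \<in> carrier_mat (dims (Suc j)) (dims j)" using Vc'[OF j] .
  have D: "D (Suc j) \<in> carrier_mat (dims (Suc j)) (dims j)" using Dc'[OF j] .
  have x: "Qp V D z 0 j \<in> carrier_vec (dims j)" by (rule Qp_c[OF Suc.prems(1)]) (use Suc.prems in simp)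
  have "(V (Suc j) + 0 \<cdot>\<^sub>m D (Suc j)) *\<^sub>v Qp V D z 0 j = V (Suc j) *\<^sub>v Qp V D z 0 j + 0 \<cdot>\<^sub>v (D (Suc j) *\<^sub>v Qp V D z 0 j)"
    by (rule mv_plus[OF V D x])
  also have "\<dots> = V (Suc j) *\<^sub>v Qp V D z 0 j" using V D by (intro eq_vecI) auto
  finally show ?case using Suc j by simp
qed simp

lemma Qp1: assumes V': "\<And>k. 1 \<le> k \<Longrightarrow> k \<le> L \<Longrightarrow> V' k = V k + D k"
  shows "z \<in> carrier_vec (dims 0) \<Longrightarrow> j \<le> L \<Longrightarrow> Qp V D z 1 j = qv V' z j"
proof (induction j)
  case (Suc j)
  have j: "j < L" using Suc by simp
  have V: "V (Suc j) \<in> carrier_mat (dims (Suc j)) (dims j)" using Vc'[OF j] .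
  have D: "D (Suc j) \<in> carrier_mat (dims (Suc j)) (dims j)" using Dc'[OF j] .
  have "V (Suc j) + 1 \<cdot>\<^sub>m D (Suc j) = V' (Suc j)" using V' j V D by (intro eq_matI) auto
  thus ?case using Suc j by simp
qed simp

lemma Qd0_r: assumes nd: "netdim dims L V" and dL: "dims L = 1" and z: "z \<in> carrier_vec (dims 0)"
  shows "j \<le> L \<Longrightarrow> rv L V j \<bullet> Qd V D z 0 j = (\<Sum>k\<in>{1..j}. rv L V k \<bullet> (D k *\<^sub>v qv V z (k-1)))"
proof (induction j)
  case 0 thus ?case using z rv_carrier[OF nd dL, of 0] by simp
next
  case (Suc j)
  have j: "j < L" using Suc by simp
  have V: "V (Suc j) \<in> carrier_mat (dims (Suc j)) (dims j)" using Vc'[OF j] .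
  have D: "D (Suc j) \<in> carrier_mat (dims (Suc j)) (dims j)" using Dc'[OF j] .
  have e: "Qd V D z 0 j \<in> carrier_vec (dims j)" using Qd_c[OF z] j by simp
  have p: "Qp V D z 0 j \<in> carrier_vec (dims j)" using Qp_c[OF z] j by simp
  have r: "rv L V (Suc j) \<in> carrier_vec (dims (Suc j))" using rv_carrier[OF nd dL] j by simp
  have "(V (Suc j) + 0 \<cdot>\<^sub>m D (Suc j)) *\<^sub>v Qd V D z 0 j = V (Suc j) *\<^sub>v Qd V D z 0 j + 0 \<cdot>\<^sub>v (D (Suc j) *\<^sub>v Qd V D z 0 j)"
    by (rule mv_plus[OF V D e])
  also have "\<dots> = V (Suc j) *\<^sub>v Qd V D z 0 j" using V D by (intro eq_vecI) auto
  finally have M: "(V (Suc j) + 0 \<cdot>\<^sub>m D (Suc j)) *\<^sub>v Qd V D z 0 j = V (Suc j) *\<^sub>v Qd V D z 0 j" .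
  have "rv L V (Suc j) \<bullet> Qd V D z 0 (Suc j) = rv L V (Suc j) \<bullet> (D (Suc j) *\<^sub>v qv V z j) + rv L V (Suc j) \<bullet> (V (Suc j) *\<^sub>v Qd V D z 0 j)"
    using M Qp0[OF z, of j] j r V D e p by (simp add: scalar_prod_add_distrib[of _ "dims (Suc j)"])
  also have "rv L V (Suc j) \<bullet> (V (Suc j) *\<^sub>v Qd V D z 0 j) = rv L V j \<bullet> Qd V D z 0 j"
  proof -
    have "rv L V j = transpose_mat (V (Suc j)) *\<^sub>v rv L V (Suc j)" using rv_step[of "Suc j" L V] j by simp
    thus ?thesis using transpose_vec_mult_scalar[OF V e r] by simp
  qed
  also have "\<dots> = (\<Sum>k\<in>{1..j}. rv L V k \<bullet> (D k *\<^sub>v qv V z (k-1)))" using Suc j by simp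
  finally show ?case by simp
qed

end

lemma pathb_intro: "path dims L V D \<Longrightarrow> R \<ge> 1 \<Longrightarrow> (\<And>k. 1 \<le> k \<Longrightarrow> k \<le> L \<Longrightarrow> frob (V k) \<le> R - 1)
  \<Longrightarrow> (\<And>k. 1 \<le> k \<Longrightarrow> k \<le> L \<Longrightarrow> frob (D k) \<le> 1) \<Longrightarrow> z \<in> carrier_vec (dims 0) \<Longrightarrow> vnorm z \<le> 1
  \<Longrightarrow> pathb dims L V D R z"
  unfolding pathb_def pathb_axioms_def by auto

lemma descent:
  fixes dims :: "nat \<Rightarrow> nat" and L d n :: nat and z :: "nat \<Rightarrow> real vec" and V V' D :: "nat \<Rightarrow> real mat"
    and R beta G :: real and l dl :: "real \<Rightarrow> real"
  assumes L1: "L \<ge> 1" and nd: "netdim dims L V" and d: "dims 0 = d" and dL: "dims L = 1"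
    and z: "\<And>i. i < n \<Longrightarrow> z i \<in> carrier_vec d" and zb: "\<And>i. i < n \<Longrightarrow> vnorm (z i) \<le> 1"
    and n: "n \<ge> 1"
    and Dc: "\<And>k. 1 \<le> k \<Longrightarrow> k \<le> L \<Longrightarrow> D k \<in> carrier_mat (dims k) (dims (k-1))"
    and Db: "\<And>k. 1 \<le> k \<Longrightarrow> k \<le> L \<Longrightarrow> frob (D k) \<le> 1"
    and R1: "R \<ge> 1" and Vb: "\<And>k. 1 \<le> k \<Longrightarrow> k \<le> L \<Longrightarrow> frob (V k) \<le> R - 1"
    and V': "\<And>k. 1 \<le> k \<Longrightarrow> k \<le> L \<Longrightarrow> V' k = V k + D k"
    and ld: "\<And>s. (l has_real_derivative dl s) (at s)"
    and lip: "\<And>a b. \<bar>dl a - dl b\<bar> \<le> beta * \<bar>a - b\<bar>" and gb: "\<And>s. \<bar>dl s\<bar> \<le> G"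
  shows "risk l n z d L V' \<le> risk l n z d L V + (\<Sum>k\<in>{1..L}. finner (D k) (ngrad dl n z d dims L V k))
      + (beta + G) * R^(2*L-2) * (\<Sum>k\<in>{1..L}. frob (D k))^2"
proof -
  have pa: "path dims L V D" using netdimD[OF nd] Dc by unfold_locales auto
  have nd': "netdim dims L V'" unfolding netdim_def using V' netdimD[OF nd] Dc by auto
  have zi: "\<And>i. i < n \<Longrightarrow> z i \<in> carrier_vec (dims 0)" using z d by simp
  have pb: "\<And>i. i < n \<Longrightarrow> pathb dims L V D R (z i)" using pathb_intro[OF pa R1 Vb Db zi zb] by simp
  have beta0: "beta \<ge> 0" using lip[of 1 0] by simp
  have G0: "G \<ge> 0" using gb[of 0] by simp
  define p where "p i t = Qp V D (z i) t L $ 0" for i t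
  define q where "q i t = Qd V D (z i) t L $ 0" for i t
  define g where "g t = (1/real n) * (\<Sum>i<n. l (p i t))" for t
  define g' where "g' t = (1/real n) * (\<Sum>i<n. dl (p i t) * q i t)" for t
  define S where "S = (\<Sum>k\<in>{1..L}. frob (D k))"
  define \<kappa> where "\<kappa> = 2 * (beta + G) * R^(2*L-2) * S^2"
  have S0: "S \<ge> 0" unfolding S_def by (auto intro!: sum_nonneg frob_nonneg)
  have gder: "(g has_real_derivative g' t) (at t)" for t
  proof -
    have "((\<lambda>t. \<Sum>i<n. l (p i t)) has_real_derivative (\<Sum>i<n. dl (p i t) * q i t)) (at t)"
    proof (rule DERIV_sum)
      fix i assume "i \<in> {..<n}"
      hence "((\<lambda>t. p i t) has_real_derivative q i t) (at t)"
        unfolding p_def q_def using path.Qp_deriv[OF pa zi, of i L 0 t] dL by simp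
      thus "((\<lambda>t. l (p i t)) has_real_derivative dl (p i t) * q i t) (at t)" by (rule DERIV_chain2[OF ld])
    qed
    thus ?thesis unfolding g_def g'_def by (rule DERIV_cmult)
  qed
  have g1: "g 1 = risk l n z d L V'"
  proof -
    have "p i 1 = wprod d L V' \<bullet> z i" if i: "i < n" for i
      unfolding p_def using path.Qp1[OF pa V' zi[OF i], of L] p_top[OF nd' d dL z[OF i]] by simp
    thus ?thesis unfolding g_def risk_def by simp
  qed
  have g0: "g 0 = risk l n z d L V"
  proof -
    have "p i 0 = wprod d L V \<bullet> z i" if i: "i < n" for i
      unfolding p_def using path.Qp0[OF pa zi[OF i], of L] p_top[OF nd d dL z[OF i]] by simp
    thus ?thesis unfolding g_def risk_def by simp
  qed
  define PP where "PP = R^L / R"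
  have PP: "PP = R^(L-1)" unfolding PP_def using R1 L1 by (cases L) auto
  have PP0: "PP \<ge> 0" unfolding PP using R1 by simp
  have PP2: "PP^2 = R^(2*L-2)" unfolding PP by (simp add: power_mult[symmetric] mult.commute right_diff_distrib')
  have PP1: "PP \<le> R^(2*L-2)" unfolding PP using R1 L1 by (intro power_increasing) auto
  have bnd: "\<bar>g' t - g' 0\<bar> \<le> \<kappa> * t" if t: "0 \<le> t" "t \<le> 1" for t
  proof -
    have each: "\<bar>dl (p i t) * q i t - dl (p i 0) * q i 0\<bar> \<le> \<kappa> * t" if i: "i < n" for i
    proof -
      have c1: "Qp V D (z i) t L \<in> carrier_vec 1" "Qp V D (z i) 0 L \<in> carrier_vec 1"
        using path.Qp_c[OF pa zi[OF i], of L] dL by auto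
      have c2: "Qd V D (z i) t L \<in> carrier_vec 1" "Qd V D (z i) 0 L \<in> carrier_vec 1"
        using path.Qd_c[OF pa zi[OF i], of L] dL by auto
      have dp: "\<bar>p i t - p i 0\<bar> \<le> t * PP * S"
      proof -
        have "\<bar>p i t - p i 0\<bar> = \<bar>(Qp V D (z i) t L - Qp V D (z i) 0 L) $ 0\<bar>" unfolding p_def using c1 by simp
        also have "\<dots> \<le> vnorm (Qp V D (z i) t L - Qp V D (z i) 0 L)" using c1 by (intro vnorm_component) simp
        also have "\<dots> \<le> t * PP * S" using pathb.E2[OF pb[OF i] t, of L] unfolding pathb.P_eq[OF pb[OF i]] pathb.S_eq[OF pb[OF i]] PP_def S_def by simp
        finally show ?thesis .
      qed
      have dq: "\<bar>q i t\<bar> \<le> PP * S"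
      proof -
        have "\<bar>q i t\<bar> \<le> vnorm (Qd V D (z i) t L)" unfolding q_def using c2 by (intro vnorm_component) simp
        also have "\<dots> \<le> PP * S" using pathb.E3[OF pb[OF i] t, of L] unfolding pathb.P_eq[OF pb[OF i]] pathb.S_eq[OF pb[OF i]] PP_def S_def by simp
        finally show ?thesis .
      qed
      have dqq: "\<bar>q i t - q i 0\<bar> \<le> 2 * t * PP * S^2"
      proof -
        have "\<bar>q i t - q i 0\<bar> = \<bar>(Qd V D (z i) t L - Qd V D (z i) 0 L) $ 0\<bar>" unfolding q_def using c2 by simp
        also have "\<dots> \<le> vnorm (Qd V D (z i) t L - Qd V D (z i) 0 L)" using c2 by (intro vnorm_component) simp
        also have "\<dots> \<le> 2 * t * PP * S^2" using pathb.E4[OF pb[OF i] t, of L] unfolding pathb.P_eq[OF pb[OF i]] pathb.S_eq[OF pb[OF i]] PP_def S_def by simp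
        finally show ?thesis .
      qed
      have "\<bar>dl (p i t) * q i t - dl (p i 0) * q i 0\<bar> = \<bar>(dl (p i t) - dl (p i 0)) * q i t + dl (p i 0) * (q i t - q i 0)\<bar>"
        by (simp add: algebra_simps)
      also have "\<dots> \<le> \<bar>dl (p i t) - dl (p i 0)\<bar> * \<bar>q i t\<bar> + \<bar>dl (p i 0)\<bar> * \<bar>q i t - q i 0\<bar>"
        by (metis abs_mult abs_triangle_ineq)
      also have "\<dots> \<le> (beta * (t * PP * S)) * (PP * S) + G * (2 * t * PP * S^2)"
      proof (rule add_mono)
        have "\<bar>dl (p i t) - dl (p i 0)\<bar> \<le> beta * (t * PP * S)"
          using lip[of "p i t" "p i 0"] dp beta0 by (meson mult_left_mono order_trans)
        thus "\<bar>dl (p i t) - dl (p i 0)\<bar> * \<bar>q i t\<bar> \<le> (beta * (t * PP * S)) * (PP * S)"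
          using dq by (intro mult_mono) auto
        show "\<bar>dl (p i 0)\<bar> * \<bar>q i t - q i 0\<bar> \<le> G * (2 * t * PP * S^2)"
          using gb dqq G0 by (intro mult_mono) auto
      qed
      also have "\<dots> = t * S^2 * (beta * PP^2 + 2 * G * PP)" by (simp add: power2_eq_square algebra_simps)
      also have "\<dots> \<le> t * S^2 * (beta * R^(2*L-2) + 2 * G * R^(2*L-2))"
        unfolding PP2 using PP1 t G0 S0 beta0 by (intro mult_left_mono add_mono) auto
      also have "\<dots> \<le> \<kappa> * t" unfolding \<kappa>_def using t G0 beta0 S0 R1
        by (simp add: algebra_simps mult_left_mono)
      finally show ?thesis .
    qed
    have "\<bar>g' t - g' 0\<bar> = (1/real n) * \<bar>\<Sum>i<n. dl (p i t) * q i t - dl (p i 0) * q i 0\<bar>"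
    proof -
      have "g' t - g' 0 = (1/real n) * (\<Sum>i<n. dl (p i t) * q i t - dl (p i 0) * q i 0)"
        unfolding g'_def by (simp add: sum_subtractf right_diff_distrib)
      thus ?thesis by (simp add: abs_mult)
    qed
    also have "\<dots> \<le> (1/real n) * (\<Sum>i<n. \<kappa> * t)"
      using each by (intro mult_left_mono order_trans[OF sum_abs sum_mono]) auto
    also have "\<dots> = \<kappa> * t" using n by simp
    finally show ?thesis .
  qed
  have main: "g 1 \<le> g 0 + g' 0 + \<kappa> / 2"
  proof -
    define h where "h t = g t - t * g' 0 - \<kappa> / 2 * t^2" for t
    have "h 0 \<ge> h 1"
    proof (rule DERIV_nonpos_imp_nonincreasing[of 0 1 h])
      fix x :: real assume x: "0 \<le> x" "x \<le> 1"
      have "(h has_real_derivative g' x - g' 0 - \<kappa> * x) (at x)"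
      proof -
        have "(h has_real_derivative g' x - 1 * g' 0 - \<kappa> / 2 * (2 * x)) (at x)"
          unfolding h_def by (intro derivative_eq_intros gder) (auto simp: power2_eq_square intro: gder)
        thus ?thesis by simp
      qed
      moreover have "g' x - g' 0 - \<kappa> * x \<le> 0" using bnd[OF x] by (simp add: abs_le_iff algebra_simps)
      ultimately show "\<exists>y. (h has_real_derivative y) (at x) \<and> y \<le> 0" by blast
    qed simp
    thus ?thesis unfolding h_def by simp
  qed
  have g'0: "g' 0 = (\<Sum>k\<in>{1..L}. finner (D k) (ngrad dl n z d dims L V k))"
  proof -
    have pi: "p i 0 = wprod d L V \<bullet> z i" if i: "i < n" for i
      unfolding p_def using path.Qp0[OF pa zi[OF i], of L] p_top[OF nd d dL z[OF i]] by simp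
    have qi: "q i 0 = (\<Sum>k\<in>{1..L}. rv L V k \<bullet> (D k *\<^sub>v qv V (z i) (k-1)))" if i: "i < n" for i
    proof -
      have c: "Qd V D (z i) 0 L \<in> carrier_vec 1" using path.Qd_c[OF pa zi[OF i], of L] dL by auto
      have "q i 0 = rv L V L \<bullet> Qd V D (z i) 0 L" unfolding q_def rv_L using c by (simp add: scalar_prod_def)
      also have "\<dots> = (\<Sum>k\<in>{1..L}. rv L V k \<bullet> (D k *\<^sub>v qv V (z i) (k-1)))"
        by (rule path.Qd0_r[OF pa nd dL zi[OF i]]) simp
      finally show ?thesis .
    qed
    have "g' 0 = (1/real n) * (\<Sum>i<n. \<Sum>k\<in>{1..L}. dl (wprod d L V \<bullet> z i) * (rv L V k \<bullet> (D k *\<^sub>v qv V (z i) (k-1))))"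
      unfolding g'_def using pi qi by (simp add: sum_distrib_left)
    also have "\<dots> = (\<Sum>k\<in>{1..L}. (1/real n) * (\<Sum>i<n. dl (wprod d L V \<bullet> z i) * (rv L V k \<bullet> (D k *\<^sub>v qv V (z i) (k-1)))))"
      by (subst sum.swap) (simp add: sum_distrib_left)
    also have "\<dots> = (\<Sum>k\<in>{1..L}. finner (D k) (ngrad dl n z d dims L V k))"
    proof (rule sum.cong[OF refl])
      fix k assume k: "k \<in> {1..L}"
      show "(1/real n) * (\<Sum>i<n. dl (wprod d L V \<bullet> z i) * (rv L V k \<bullet> (D k *\<^sub>v qv V (z i) (k-1))))
          = finner (D k) (ngrad dl n z d dims L V k)"
        unfolding ngrad_def using k
        by (intro gm_finner[symmetric] Dc rv_carrier[OF nd dL] qv_carrier[OF nd]) (auto simp: zi)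
    qed
    finally show ?thesis .
  qed
  have "risk l n z d L V' = g 1" using g1 by simp
  also have "\<dots> \<le> g 0 + g' 0 + \<kappa> / 2" by (rule main)
  also have "\<dots> = risk l n z d L V + (\<Sum>k\<in>{1..L}. finner (D k) (ngrad dl n z d dims L V k))
      + (beta + G) * R^(2*L-2) * (\<Sum>k\<in>{1..L}. frob (D k))^2"
    unfolding g0 g'0 \<kappa>_def S_def by simp
  finally show ?thesis .
qed

lemma N_qv_bound: assumes nd: "netdim dims L V" and d: "dims 0 = d" and z: "z \<in> carrier_vec d"
  and B: "0 \<le> B" "\<And>k. 1 \<le> k \<Longrightarrow> k \<le> L \<Longrightarrow> frob (V k) \<le> B"
  shows "j \<le> L \<Longrightarrow> N (qv V z j) \<le> B^(2*j) * N z"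
proof (induction j)
  case (Suc j)
  have V: "V (Suc j) \<in> carrier_mat (dims (Suc j)) (dims j)" using netdimD[OF nd, of "Suc j"] Suc by simp
  have q: "qv V z j \<in> carrier_vec (dims j)" using qv_carrier[OF nd, of z j] z d Suc by simp
  have "N (qv V z (Suc j)) \<le> frob (V (Suc j))^2 * N (qv V z j)" using N_mv_le[OF V q] by simp
  also have "\<dots> \<le> B^2 * (B^(2*j) * N z)"
    using Suc B frob_nonneg[of "V (Suc j)"] N_nonneg[of "qv V z j"]
    by (intro mult_mono power_mono) auto
  also have "B^2 * (B^(2*j) * N z) = B^(2 * Suc j) * N z" by (simp add: power_add mult.assoc power2_eq_square)
  finally show ?case .
qed simp

lemma N_rv'_bound: assumes nd: "netdim dims L V" and dL: "dims L = 1"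
  and B: "0 \<le> B" "\<And>k. 1 \<le> k \<Longrightarrow> k \<le> L \<Longrightarrow> frob (V k) \<le> B"
  shows "j \<le> L \<Longrightarrow> N (rv' L V j) \<le> B^(2*j)"
proof (induction j)
  case 0 thus ?case by (simp add: scalar_prod_def)
next
  case (Suc j)
  have V: "V (L - j) \<in> carrier_mat (dims (L - j)) (dims (L - j - 1))" using netdimD[OF nd, of "L - j"] Suc by simp
  have r: "rv' L V j \<in> carrier_vec (dims (L - j))" using rv'_carrier[OF nd dL, of j] Suc by simp
  have "N (rv' L V (Suc j)) \<le> frob (V (L - j))^2 * N (rv' L V j)" using N_tmv_le[OF V r] by simp
  also have "\<dots> \<le> B^2 * B^(2*j)"
    using Suc B frob_nonneg[of "V (L - j)"] N_nonneg[of "rv' L V j"]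
    by (intro mult_mono power_mono) auto
  finally show ?case by (simp add: power_add flip: power_add)
qed

lemma N_rv_bound: assumes nd: "netdim dims L V" and dL: "dims L = 1"
  and B: "0 \<le> B" "\<And>k. 1 \<le> k \<Longrightarrow> k \<le> L \<Longrightarrow> frob (V k) \<le> B" and k: "k \<le> L"
  shows "N (rv L V k) \<le> B^(2*(L-k))"
  unfolding rv_def using N_rv'_bound[OF nd dL B, of "L - k"] by simp

lemma frob_smult: "frob (c \<cdot>\<^sub>m A) = \<bar>c\<bar> * frob A"
proof -
  have "frob (c \<cdot>\<^sub>m A)^2 = (c * frob A)^2"
    unfolding power_mult_distrib[of c "frob A"] frob_sq by (simp add: power_mult_distrib sum_distrib_left)
  hence "sqrt (frob (c \<cdot>\<^sub>m A)^2) = sqrt ((c * frob A)^2)" by simp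
  thus ?thesis using frob_nonneg[of "c \<cdot>\<^sub>m A"] frob_nonneg[of A] by (simp add: abs_mult)
qed

lemma finner_smult_self: "finner (c \<cdot>\<^sub>m A) A = c * frob A ^ 2"
  unfolding finner_def frob_sq by (simp add: sum_distrib_left power2_eq_square mult.assoc)

lemma finner_self: "finner A A = frob A ^ 2"
  unfolding finner_def frob_sq by (simp add: power2_eq_square)

locale gd =
  fixes n d L :: nat
    and x :: "nat \<Rightarrow> real vec" and y :: "nat \<Rightarrow> real"
    and l dl :: "real \<Rightarrow> real" and beta G :: real
    and dims :: "nat \<Rightarrow> nat"
    and W :: "nat \<Rightarrow> nat \<Rightarrow> real mat"
    and eta Rr :: "nat \<Rightarrow> real"
  assumes n_pos: "n \<ge> 1"
    and x_dim: "\<And>i. i < n \<Longrightarrow> x i \<in> carrier_vec d"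
    and x_norm: "\<And>i. i < n \<Longrightarrow> vnorm (x i) \<le> 1"
    and y_pm: "\<And>i. i < n \<Longrightarrow> y i = 1 \<or> y i = -1"
    and L_ge: "L \<ge> 2"
    and dims_pos: "\<And>k. k \<le> L \<Longrightarrow> dims k > 0"
    and dims_0: "dims 0 = d" and dims_L: "dims L = 1"
    and W0_dim: "\<And>k. 1 \<le> k \<Longrightarrow> k \<le> L \<Longrightarrow> W 0 k \<in> carrier_mat (dims k) (dims (k - 1))"
    and l_deriv: "\<And>s. (l has_real_derivative dl s) (at s)"
    and dl_neg: "\<And>s. dl s < 0"
    and l_top: "(l \<longlongrightarrow> 0) at_top"
    and dl_lip: "\<And>a b. \<bar>dl a - dl b\<bar> \<le> beta * \<bar>a - b\<bar>"
    and dl_bdd: "\<And>s. \<bar>dl s\<bar> \<le> G"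
    and GD: "\<And>t k. 1 \<le> k \<Longrightarrow> k \<le> L \<Longrightarrow>
      W (Suc t) k = W t k - eta t \<cdot>\<^sub>m grad_k l n (\<lambda>i. y i \<cdot>\<^sub>v x i) d L (W t) k"
    and eta_def: "\<And>t. eta t = min (1 / betaR L beta G (Rr t)) 1"
    and Rr_ball: "\<And>t k. 1 \<le> k \<Longrightarrow> k \<le> L \<Longrightarrow> frob (W t k) \<le> Rr t - 1"
begin

definition z :: "nat \<Rightarrow> real vec" where "z i = y i \<cdot>\<^sub>v x i"
definition gr :: "nat \<Rightarrow> nat \<Rightarrow> real mat" where "gr t k = ngrad dl n z d dims L (W t) k"
definition NS :: "nat \<Rightarrow> real" where "NS t = (\<Sum>k\<in>{1..L}. frob (gr t k)^2)"
definition Sk :: "nat \<Rightarrow> nat \<Rightarrow> real" where "Sk t k = (\<Sum>s<t. (eta s)^2 * frob (gr s k)^2)"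
definition SS :: "nat \<Rightarrow> real" where "SS t = (\<Sum>s<t. (eta s)^2 * NS s)"
definition R0 :: real where "R0 = risk l n z d L (W 0)"

lemma z_eq: "(\<lambda>i. y i \<cdot>\<^sub>v x i) = z" unfolding z_def by auto

lemma zc: "i < n \<Longrightarrow> z i \<in> carrier_vec d" unfolding z_def using x_dim by simp

lemma zb: "i < n \<Longrightarrow> vnorm (z i) \<le> 1"
proof -
  assume i: "i < n"
  have "(y i)^2 = 1" using y_pm[OF i] by auto
  hence "vnorm (z i) = vnorm (x i)" unfolding z_def vnorm_def N_smult by simp
  thus ?thesis using x_norm[OF i] by simp
qed

lemma nd: "netdim dims L (W t)"
proof (induction t)
  case 0 thus ?case unfolding netdim_def using W0_dim by auto
next
  case (Suc t)
  show ?case unfolding netdim_def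
  proof (intro allI impI)
    fix k assume k: "1 \<le> k \<and> k \<le> L"
    have "W t k \<in> carrier_mat (dims k) (dims (k-1))" using netdimD[OF Suc] k by simp
    moreover have "grad_k l n (\<lambda>i. y i \<cdot>\<^sub>v x i) d L (W t) k \<in> carrier_mat (dims k) (dims (k-1))"
      unfolding grad_k_def using calculation by simp
    hence "eta t \<cdot>\<^sub>m grad_k l n (\<lambda>i. y i \<cdot>\<^sub>v x i) d L (W t) k \<in> carrier_mat (dims k) (dims (k-1))" by simp
    from minus_carrier_mat[OF this] show "W (Suc t) k \<in> carrier_mat (dims k) (dims (k-1))" using GD[of k t] k by simp
  qed
qed

lemma Wc: "1 \<le> k \<Longrightarrow> k \<le> L \<Longrightarrow> W t k \<in> carrier_mat (dims k) (dims (k-1))"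
  using netdimD[OF nd] by simp

lemma netW: "net dims L d n z (W t)"
  using nd dims_0 dims_L zc by unfold_locales auto

lemma grc: "gr t k \<in> carrier_mat (dims k) (dims (k-1))" unfolding gr_def by (rule ngrad_carrier)

lemma GD': "1 \<le> k \<Longrightarrow> k \<le> L \<Longrightarrow> W (Suc t) k = W t k - eta t \<cdot>\<^sub>m gr t k"
proof -
  assume k: "1 \<le> k" "k \<le> L"
  have "grad_k l n z d L (W t) k = ngrad dl n z d dims L (W t) k"
    by (rule grad_ngrad[OF nd dims_0 dims_L]) (use zc k l_deriv in auto)
  thus ?thesis using GD[OF k, of t] unfolding z_eq gr_def by simp
qed

lemma G_pos: "G > 0" using dl_bdd[of 0] dl_neg[of 0] by simp
lemma beta0: "beta \<ge> 0" using dl_lip[of 1 0] by simp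
lemma R1: "Rr t \<ge> 1" using Rr_ball[of 1 t] frob_nonneg[of "W t 1"] L_ge by simp
lemma bR_pos: "betaR L beta G (Rr t) > 0"
  unfolding betaR_def using L_ge R1[of t] G_pos beta0 by (intro mult_pos_pos) auto
lemma eta_pos: "eta t > 0" unfolding eta_def using bR_pos[of t] by simp
lemma eta_le1: "eta t \<le> 1" unfolding eta_def by simp
lemma eta_bR: "eta t * betaR L beta G (Rr t) \<le> 1"
proof -
  have "eta t \<le> 1 / betaR L beta G (Rr t)" unfolding eta_def by simp
  thus ?thesis using bR_pos[of t] by (simp add: field_simps)
qed

lemma l_pos: "l s > 0"
proof -
  have dec: "l b < l a" if "a < b" for a b
  proof -
    obtain c where "a < c" "c < b" "l b - l a = (b - a) * dl c"
      using MVT2[OF \<open>a < b\<close>, of l dl] l_deriv by (auto simp: DERIV_def has_field_derivative_def)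
    thus ?thesis using dl_neg[of c] \<open>a < b\<close> mult_pos_neg[of "b - a" "dl c"] by linarith
  qed
  have "eventually (\<lambda>t. l t \<le> l (s + 1)) at_top"
    unfolding eventually_at_top_linorder by (intro exI[of _ "s + 1"]) (auto intro: less_imp_le dec simp: le_less)
  hence "0 \<le> l (s + 1)" using tendsto_upperbound[OF l_top] by auto
  thus ?thesis using dec[of s "s + 1"] by simp
qed

lemma risk_nonneg: "risk l n z d L V \<ge> 0"
  unfolding risk_def by (intro mult_nonneg_nonneg sum_nonneg) (auto intro: less_imp_le l_pos)

end

context gd begin

lemma Nz: "i < n \<Longrightarrow> N (z i) \<le> 1"
  using zb[of i] vnorm_sq[of "z i"] vnorm_nonneg[of "z i"] by (metis power_le_one)

lemma gr_bound: assumes k: "1 \<le> k" "k \<le> L" shows "frob (gr t k) \<le> G * (Rr t)^(L-1)"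
proof -
  define B where "B = Rr t - 1"
  have B0: "B \<ge> 0" unfolding B_def using R1[of t] by simp
  have Bb: "\<And>k. 1 \<le> k \<Longrightarrow> k \<le> L \<Longrightarrow> frob (W t k) \<le> B" unfolding B_def using Rr_ball by simp
  have Mb: "N (qv (W t) (z i) (k-1)) \<le> B^(2*(k-1))" if i: "i < n" for i
  proof -
    have "N (qv (W t) (z i) (k-1)) \<le> B^(2*(k-1)) * N (z i)"
      using N_qv_bound[OF nd dims_0 zc[OF i] B0 Bb, of "k-1"] k by simp
    also have "\<dots> \<le> B^(2*(k-1)) * 1" using Nz[OF i] B0 by (intro mult_left_mono) auto
    finally show ?thesis by simp
  qed
  have "frob (gr t k)^2 \<le> G^2 * N (rv L (W t) k) * B^(2*(k-1))"
    unfolding gr_def by (rule net.key3[OF netW k n_pos dl_bdd Mb])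
  also have "\<dots> \<le> G^2 * B^(2*(L-k)) * B^(2*(k-1))"
  proof -
    have "N (rv L (W t) k) \<le> B^(2*(L-k))" by (rule N_rv_bound[OF nd dims_L B0 Bb k(2)])
    from mult_left_mono[OF this, of "G^2"] have "G^2 * N (rv L (W t) k) \<le> G^2 * B^(2*(L-k))" by simp
    from mult_right_mono[OF this, of "B^(2*(k-1))"] show ?thesis using B0 by simp
  qed
  also have "\<dots> = G^2 * B^(2*(L-k) + 2*(k-1))" by (simp add: power_add mult.assoc)
  also have "2*(L-k) + 2*(k-1) = 2*(L-1)" using k by simp
  also have "G^2 * B^(2*(L-1)) = (G * B^(L-1))^2"
    by (simp add: power_mult_distrib power_mult[symmetric] mult.commute)
  finally have "frob (gr t k) \<le> G * B^(L-1)"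
    by (rule power2_le_imp_le) (use G_pos B0 in simp)
  also have "\<dots> \<le> G * (Rr t)^(L-1)"
  proof -
    have "B^(L-1) \<le> (Rr t)^(L-1)" by (rule power_mono) (use B0 in \<open>auto simp: B_def\<close>)
    from mult_left_mono[OF this, of G] G_pos show ?thesis by simp
  qed
  finally show ?thesis .
qed

lemma G_le_bR: "G * (Rr t)^(L-1) \<le> betaR L beta G (Rr t)"
proof -
  have R: "Rr t \<ge> 1" by (rule R1)
  have p: "(Rr t)^(L-1) \<le> (Rr t)^(2*L-2)" by (rule power_increasing) (use R L_ge in auto)
  have "G * (Rr t)^(L-1) \<le> (beta + G) * (Rr t)^(2*L-2)"
    by (rule mult_mono) (use G_pos beta0 R p in auto)
  also have "\<dots> \<le> (2 * real L ^ 2) * ((beta + G) * (Rr t)^(2*L-2))"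
  proof -
    have L2: "real L \<ge> 2" using L_ge by simp
    have "real L * real L \<ge> 2 * 2" using L2 by (intro mult_mono) auto
    hence c1: "(1::real) \<le> 2 * real L ^ 2" by (simp add: power2_eq_square)
    have X0: "0 \<le> (beta + G) * (Rr t)^(2*L-2)" using G_pos beta0 R by simp
    show ?thesis using mult_right_mono[OF c1 X0] by simp
  qed
  also have "\<dots> = betaR L beta G (Rr t)" unfolding betaR_def by (simp add: algebra_simps)
  finally show ?thesis .
qed

lemma eta_gr: assumes k: "1 \<le> k" "k \<le> L" shows "eta t * frob (gr t k) \<le> 1"
proof -
  have "eta t * frob (gr t k) \<le> eta t * (G * (Rr t)^(L-1))"
    using mult_left_mono[OF gr_bound[OF k] less_imp_le[OF eta_pos]] .
  also have "\<dots> \<le> eta t * betaR L beta G (Rr t)"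
    using mult_left_mono[OF G_le_bR less_imp_le[OF eta_pos]] .
  also have "\<dots> \<le> 1" by (rule eta_bR)
  finally show ?thesis .
qed

end

context gd begin

lemma NS_nonneg: "NS t \<ge> 0" unfolding NS_def by (auto intro!: sum_nonneg)

lemma step: "risk l n z d L (W (Suc t)) \<le> risk l n z d L (W t) - (3/4) * eta t * NS t"
proof -
  define e where "e = eta t"
  define D where "D k = (- e) \<cdot>\<^sub>m gr t k" for k
  have e0: "e > 0" unfolding e_def by (rule eta_pos)
  have L1: "L \<ge> 1" using L_ge by simp
  have Dc: "D k \<in> carrier_mat (dims k) (dims (k-1))" for k unfolding D_def using grc by simp
  have Db: "frob (D k) \<le> 1" if k: "1 \<le> k" "k \<le> L" for k
    unfolding D_def frob_smult using eta_gr[OF k, of t] e0 unfolding e_def by simp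
  have V': "W (Suc t) k = W t k + D k" if k: "1 \<le> k" "k \<le> L" for k
  proof -
    have "W (Suc t) k = W t k - e \<cdot>\<^sub>m gr t k" unfolding e_def by (rule GD'[OF k])
    also have "\<dots> = W t k + D k" unfolding D_def using Wc[OF k, of t] grc[of t k]
      by (intro eq_matI) auto
    finally show ?thesis .
  qed
  have desc: "risk l n z d L (W (Suc t)) \<le> risk l n z d L (W t) + (\<Sum>k\<in>{1..L}. finner (D k) (ngrad dl n z d dims L (W t) k))
      + (beta + G) * (Rr t)^(2*L-2) * (\<Sum>k\<in>{1..L}. frob (D k))^2"
    by (rule descent[OF L1 nd dims_0 dims_L zc zb n_pos Dc Db R1 Rr_ball V' l_deriv dl_lip dl_bdd])
  have f: "(\<Sum>k\<in>{1..L}. finner (D k) (ngrad dl n z d dims L (W t) k)) = - e * NS t"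
    unfolding D_def NS_def gr_def[symmetric] finner_smult_self by (simp add: sum_distrib_left)
  have s: "(\<Sum>k\<in>{1..L}. frob (D k))^2 \<le> e^2 * (real L * NS t)"
  proof -
    have "(\<Sum>k\<in>{1..L}. frob (D k)) = e * (\<Sum>k\<in>{1..L}. frob (gr t k))"
      unfolding D_def frob_smult using e0 by (simp add: sum_distrib_left)
    hence "(\<Sum>k\<in>{1..L}. frob (D k))^2 = e^2 * (\<Sum>k\<in>{1..L}. frob (gr t k))^2" by (simp add: power_mult_distrib)
    also have "\<dots> \<le> e^2 * (real (card {1..L}) * (\<Sum>k\<in>{1..L}. frob (gr t k)^2))"
      by (intro mult_left_mono sum_sq_le) auto
    finally show ?thesis unfolding NS_def by simp
  qed
  have c: "(beta + G) * (Rr t)^(2*L-2) * real L * e \<le> 1/4"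
  proof -
    have "(beta + G) * (Rr t)^(2*L-2) * real L * e = (e * betaR L beta G (Rr t)) / (2 * real L)"
      unfolding betaR_def using L_ge by (simp add: power2_eq_square field_simps)
    also have "\<dots> \<le> 1 / (2 * real L)" using eta_bR[of t] L_ge unfolding e_def by (intro divide_right_mono) auto
    also have "\<dots> \<le> 1/4" using L_ge by (simp add: field_simps)
    finally show ?thesis .
  qed
  have "(beta + G) * (Rr t)^(2*L-2) * (\<Sum>k\<in>{1..L}. frob (D k))^2 \<le> (beta + G) * (Rr t)^(2*L-2) * (e^2 * (real L * NS t))"
    using s G_pos beta0 R1[of t] by (intro mult_left_mono) auto
  also have "\<dots> = ((beta + G) * (Rr t)^(2*L-2) * real L * e) * (e * NS t)" by (simp add: power2_eq_square algebra_simps)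
  also have "\<dots> \<le> (1/4) * (e * NS t)" using c e0 NS_nonneg[of t] by (intro mult_right_mono) auto
  finally have "(beta + G) * (Rr t)^(2*L-2) * (\<Sum>k\<in>{1..L}. frob (D k))^2 \<le> (1/4) * (e * NS t)" .
  thus ?thesis using desc f unfolding e_def by simp
qed

lemma cumul: "risk l n z d L (W t) + (3/4) * (\<Sum>s<t. eta s * NS s) \<le> R0"
proof (induction t)
  case 0 thus ?case unfolding R0_def by simp
next
  case (Suc t)
  thus ?case using step[of t] by (simp add: algebra_simps)
qed

lemma R0_nonneg: "R0 \<ge> 0" unfolding R0_def by (rule risk_nonneg)

lemma SS_bound: "SS t \<le> (4/3) * R0"
proof -
  have "SS t \<le> (\<Sum>s<t. eta s * NS s)" unfolding SS_def
  proof (rule sum_mono)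
    fix s
    have "(eta s)^2 \<le> eta s" using eta_pos[of s] eta_le1[of s] by (simp add: power2_eq_square mult_le_cancel_left1)
    thus "(eta s)^2 * NS s \<le> eta s * NS s" using NS_nonneg[of s] by (rule mult_right_mono)
  qed
  also have "\<dots> \<le> (4/3) * R0" using cumul[of t] risk_nonneg[of "W t"] by simp
  finally show ?thesis .
qed

lemma Sk_nonneg: "Sk t k \<ge> 0" unfolding Sk_def by (auto intro!: sum_nonneg)

lemma Sk_sum: "(\<Sum>k\<in>{1..L}. Sk t k) = SS t"
  unfolding Sk_def SS_def NS_def by (subst sum.swap) (simp add: sum_distrib_left)

lemma Sk_le_SS: "k \<in> {1..L} \<Longrightarrow> Sk t k \<le> SS t"
  unfolding Sk_sum[symmetric] using Sk_nonneg by (intro member_le_sum) auto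

lemma Sk2_le_SS: "1 \<le> k \<Longrightarrow> k < L \<Longrightarrow> Sk t k + Sk t (Suc k) \<le> SS t"
proof -
  assume k: "1 \<le> k" "k < L"
  have "Sk t k + Sk t (Suc k) = (\<Sum>j\<in>{k, Suc k}. Sk t j)" by simp
  also have "\<dots> \<le> (\<Sum>j\<in>{1..L}. Sk t j)" using k Sk_nonneg by (intro sum_mono2) auto
  finally show ?thesis unfolding Sk_sum .
qed

end

context gd begin

definition f :: "nat \<Rightarrow> nat \<Rightarrow> real vec \<Rightarrow> real" where
  "f t k v = N (transpose_mat (W t k) *\<^sub>v v) - N (W t (Suc k) *\<^sub>v v)"

lemma f_step: assumes k: "1 \<le> k" "k < L" and v: "v \<in> carrier_vec (dims k)"
  shows "f (Suc t) k v = f t k v + (eta t)^2 * (N (transpose_mat (gr t k) *\<^sub>v v) - N (gr t (Suc k) *\<^sub>v v))"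
proof -
  have Wk: "W t k \<in> carrier_mat (dims k) (dims (k-1))" using Wc k by simp
  have Wk1: "W t (Suc k) \<in> carrier_mat (dims (Suc k)) (dims k)" using Wc[of "Suc k"] k by simp
  have Gk: "gr t k \<in> carrier_mat (dims k) (dims (k-1))" by (rule grc)
  have Gk1: "gr t (Suc k) \<in> carrier_mat (dims (Suc k)) (dims k)" using grc[of t "Suc k"] by simp
  have e1: "W (Suc t) k = W t k - eta t \<cdot>\<^sub>m gr t k" using GD' k by simp
  have e2: "W (Suc t) (Suc k) = W t (Suc k) - eta t \<cdot>\<^sub>m gr t (Suc k)" using GD'[of "Suc k"] k by simp
  have K: "(transpose_mat (W t k) *\<^sub>v v) \<bullet> (transpose_mat (gr t k) *\<^sub>v v) = (W t (Suc k) *\<^sub>v v) \<bullet> (gr t (Suc k) *\<^sub>v v)"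
    unfolding gr_def by (rule net.key1[OF netW k v])
  show ?thesis unfolding f_def e1 e2 upd_NT[OF Wk Gk v] upd_N[OF Wk1 Gk1 v] K by (simp add: algebra_simps)
qed

lemma f_upper: assumes k: "1 \<le> k" "k < L" and v: "v \<in> carrier_vec (dims k)"
  shows "f t k v \<le> f 0 k v + Sk t k * N v"
proof (induction t)
  case 0 thus ?case unfolding Sk_def by simp
next
  case (Suc t)
  have Gk: "gr t k \<in> carrier_mat (dims k) (dims (k-1))" by (rule grc)
  have "N (transpose_mat (gr t k) *\<^sub>v v) - N (gr t (Suc k) *\<^sub>v v) \<le> frob (gr t k)^2 * N v"
    using N_tmv_le[OF Gk v] N_nonneg[of "gr t (Suc k) *\<^sub>v v"] by simp
  hence "(eta t)^2 * (N (transpose_mat (gr t k) *\<^sub>v v) - N (gr t (Suc k) *\<^sub>v v)) \<le> (eta t)^2 * (frob (gr t k)^2 * N v)"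
    by (rule mult_left_mono) simp
  thus ?case using Suc f_step[OF k v, of t] unfolding Sk_def by (simp add: algebra_simps sum_distrib_right)
qed

lemma f_lower: assumes k: "1 \<le> k" "k < L" and v: "v \<in> carrier_vec (dims k)"
  shows "f t k v \<ge> f 0 k v - Sk t (Suc k) * N v"
proof (induction t)
  case 0 thus ?case unfolding Sk_def by simp
next
  case (Suc t)
  have Gk1: "gr t (Suc k) \<in> carrier_mat (dims (Suc k)) (dims k)" using grc[of t "Suc k"] by simp
  have "N (transpose_mat (gr t k) *\<^sub>v v) - N (gr t (Suc k) *\<^sub>v v) \<ge> - (frob (gr t (Suc k))^2 * N v)"
    using N_mv_le[OF Gk1 v] N_nonneg[of "transpose_mat (gr t k) *\<^sub>v v"] by simp
  hence "(eta t)^2 * (N (transpose_mat (gr t k) *\<^sub>v v) - N (gr t (Suc k) *\<^sub>v v)) \<ge> (eta t)^2 * (- (frob (gr t (Suc k))^2 * N v))"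
    by (rule mult_left_mono) simp
  thus ?case using Suc f_step[OF k v, of t] unfolding Sk_def by (simp add: algebra_simps sum_distrib_right)
qed

lemma finner_const: "1 \<le> k \<Longrightarrow> k \<le> L \<Longrightarrow> finner (W t k) (gr t k) = finner (W t 1) (gr t 1)"
proof (induction k)
  case 0 thus ?case by simp
next
  case (Suc k)
  show ?case
  proof (cases "k = 0")
    case True thus ?thesis by simp
  next
    case False
    hence "finner (W t (Suc k)) (gr t (Suc k)) = finner (W t k) (gr t k)"
      unfolding gr_def using net.key2[OF netW, where dl=dl and k=k] Suc.prems by simp
    thus ?thesis using Suc False by simp
  qed
qed

lemma frob_evol: assumes k: "1 \<le> k" "k \<le> L"
  shows "frob (W t k)^2 = frob (W 0 k)^2 + Sk t k - 2 * (\<Sum>s<t. eta s * finner (W s 1) (gr s 1))"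
proof (induction t)
  case 0 thus ?case unfolding Sk_def by simp
next
  case (Suc t)
  have "frob (W (Suc t) k)^2 = frob (W t k)^2 - 2 * eta t * finner (W t k) (gr t k) + (eta t)^2 * frob (gr t k)^2"
    unfolding GD'[OF k] by (rule upd_frob[OF Wc[OF k] grc])
  thus ?case using Suc finner_const[OF k, of t] unfolding Sk_def by (simp add: algebra_simps)
qed

definition A0 :: "nat \<Rightarrow> real mat" where
  "A0 j = W 0 j * transpose_mat (W 0 j) - transpose_mat (W 0 (Suc j)) * W 0 (Suc j)"

lemma A0c: "1 \<le> j \<Longrightarrow> j < L \<Longrightarrow> A0 j \<in> carrier_mat (dims j) (dims j)"
  unfolding A0_def using Wc[of j 0] Wc[of "Suc j" 0] by (intro minus_carrier_mat) auto

lemma specA_nonneg: "1 \<le> j \<Longrightarrow> j < L \<Longrightarrow> spec (A0 j) \<ge> 0"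
  using spec_nonneg[OF A0c] dims_pos[of j] by simp

lemma f0_lower: assumes j: "1 \<le> j" "j < L" and v: "v \<in> carrier_vec (dims j)"
  shows "- f 0 j v \<le> spec (A0 j) * N v"
proof -
  have "f 0 j v = v \<bullet> (A0 j *\<^sub>v v)" unfolding f_def A0_def
    by (rule quad_identity[symmetric]) (use Wc[of j 0] Wc[of "Suc j" 0] j v in auto)
  thus ?thesis using quad_spec[OF A0c[OF j] v] by simp
qed

lemma spec_step: assumes j: "1 \<le> j" "j < L"
  shows "spec (W t (Suc j))^2 \<le> spec (W t j)^2 + spec (A0 j) + Sk t (Suc j)"
proof (rule spec_sq_least)
  show "W t (Suc j) \<in> carrier_mat (dims (Suc j)) (dims j)" using Wc[of "Suc j" t] j by simp
  show "dims j > 0" using dims_pos j by simp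
  fix v :: "real vec" assume v: "v \<in> carrier_vec (dims j)"
  have Wj: "W t j \<in> carrier_mat (dims j) (dims (j-1))" using Wc j by simp
  have "N (W t (Suc j) *\<^sub>v v) = N (transpose_mat (W t j) *\<^sub>v v) - f t j v" unfolding f_def by simp
  also have "\<dots> \<le> spec (W t j)^2 * N v - (f 0 j v - Sk t (Suc j) * N v)"
    using N_spec_T[OF Wj v] f_lower[OF j v, of t] by simp
  also have "\<dots> \<le> spec (W t j)^2 * N v + spec (A0 j) * N v + Sk t (Suc j) * N v"
    using f0_lower[OF j v] by simp
  finally show "N (W t (Suc j) *\<^sub>v v) \<le> (spec (W t j)^2 + spec (A0 j) + Sk t (Suc j)) * N v"
    by (simp add: algebra_simps)
qed

lemma spec_chain: assumes k: "1 \<le> k" "k \<le> L"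
  shows "spec (W t L)^2 \<le> spec (W t k)^2 + (\<Sum>j\<in>{k..<L}. spec (A0 j) + Sk t (Suc j))"
  using k
proof (induction "L - k" arbitrary: k)
  case 0 thus ?case by simp
next
  case (Suc m)
  have k: "k < L" "1 \<le> k" using Suc by auto
  have IH: "spec (W t L)^2 \<le> spec (W t (Suc k))^2 + (\<Sum>j\<in>{Suc k..<L}. spec (A0 j) + Sk t (Suc j))"
    using Suc.hyps(1)[of "Suc k"] Suc.hyps(2) k by simp
  have "{k..<L} = insert k {Suc k..<L}" using k by auto
  hence "(\<Sum>j\<in>{k..<L}. spec (A0 j) + Sk t (Suc j)) = (spec (A0 k) + Sk t (Suc k)) + (\<Sum>j\<in>{Suc k..<L}. spec (A0 j) + Sk t (Suc j))"
    by simp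
  thus ?case using IH spec_step[of k t] k by simp
qed

end

context gd begin

lemma Max_frob0: "1 \<le> k \<Longrightarrow> k \<le> L \<Longrightarrow> frob (W 0 k)^2 \<le> Max {frob (W 0 k) ^ 2 | k. 1 \<le> k \<and> k \<le> L}"
proof -
  assume k: "1 \<le> k" "k \<le> L"
  have fin: "finite {frob (W 0 k) ^ 2 | k. 1 \<le> k \<and> k \<le> L}"
  proof -
    have "{frob (W 0 k) ^ 2 | k. 1 \<le> k \<and> k \<le> L} = (\<lambda>k. frob (W 0 k)^2) ` {1..L}" by auto
    thus ?thesis by simp
  qed
  show ?thesis by (rule Max_ge[OF fin]) (use k in auto)
qed

lemma Dconst_eq: "Dconst L (W 0) = Max {frob (W 0 k) ^ 2 | k. 1 \<le> k \<and> k \<le> L} - frob (W 0 L)^2 + (\<Sum>j\<in>{1..<L}. spec (A0 j))"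
  unfolding Dconst_def A0_def by simp

lemma Dconst_nonneg: "Dconst L (W 0) \<ge> 0"
proof -
  have "frob (W 0 L)^2 \<le> Max {frob (W 0 k) ^ 2 | k. 1 \<le> k \<and> k \<le> L}" using Max_frob0[of L] L_ge by simp
  moreover have "(\<Sum>j\<in>{1..<L}. spec (A0 j)) \<ge> 0" using specA_nonneg by (intro sum_nonneg) auto
  ultimately show ?thesis unfolding Dconst_eq by simp
qed

lemma frob_L_le: "frob (W t L) \<le> spec (W t L)"
proof (rule frob_le_spec_row)
  show "W t L \<in> carrier_mat 1 (dims (L - 1))" using Wc[of L t] L_ge dims_L by simp
  show "dims (L-1) > 0" using dims_pos by simp
qed

lemma partI_aux: assumes k: "1 \<le> k" "k \<le> L"
  shows "frob (W t k)^2 - spec (W t k)^2 \<le> Dconst L (W 0) + SS t"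
proof -
  have L1: "1 \<le> L" "L \<le> L" using L_ge by auto
  have fk: "frob (W t k)^2 - frob (W t L)^2 = frob (W 0 k)^2 - frob (W 0 L)^2 + Sk t k - Sk t L"
    using frob_evol[OF k, of t] frob_evol[OF L1, of t] by simp
  have fL: "frob (W t L)^2 \<le> spec (W t L)^2" using frob_L_le[of t] frob_nonneg by (intro power_mono) auto
  have ch: "spec (W t L)^2 \<le> spec (W t k)^2 + (\<Sum>j\<in>{k..<L}. spec (A0 j)) + (\<Sum>j\<in>{k..<L}. Sk t (Suc j))"
    using spec_chain[OF k, of t] by (simp add: sum.distrib)
  have sh: "(\<Sum>j\<in>{k..<L}. Sk t (Suc j)) = (\<Sum>j\<in>{Suc k..L}. Sk t j)"
  proof -
    have "(\<Sum>j\<in>{k..<L}. Sk t (Suc j)) = (\<Sum>j\<in>{Suc k..<Suc L}. Sk t j)" by (rule sum.shift_bounds_Suc_ivl[symmetric])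
    also have "{Suc k..<Suc L} = {Suc k..L}" by auto
    finally show ?thesis .
  qed
  have s1: "Sk t k + (\<Sum>j\<in>{Suc k..L}. Sk t j) \<le> SS t"
  proof -
    have "{k..L} = insert k {Suc k..L}" using k by auto
    hence "Sk t k + (\<Sum>j\<in>{Suc k..L}. Sk t j) = (\<Sum>j\<in>{k..L}. Sk t j)" by simp
    also have "\<dots> \<le> (\<Sum>j\<in>{1..L}. Sk t j)" using k Sk_nonneg by (intro sum_mono2) auto
    finally show ?thesis unfolding Sk_sum .
  qed
  have s2: "(\<Sum>j\<in>{k..<L}. spec (A0 j)) \<le> (\<Sum>j\<in>{1..<L}. spec (A0 j))"
    using k specA_nonneg by (intro sum_mono2) auto
  have m: "frob (W 0 k)^2 \<le> Max {frob (W 0 k) ^ 2 | k. 1 \<le> k \<and> k \<le> L}" by (rule Max_frob0[OF k])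
  show ?thesis unfolding Dconst_eq using fk fL ch sh s1 s2 m Sk_nonneg[of t L] by linarith
qed

lemma partI: "1 \<le> k \<Longrightarrow> k \<le> L \<Longrightarrow> frob (W t k)^2 - spec (W t k)^2 \<le> Dconst L (W 0) + 2 * R0"
  using partI_aux[of k t] SS_bound[of t] R0_nonneg by simp

end

lemma bessel_vec: assumes c: "c \<in> carrier_vec m" and u: "u \<in> carrier_vec m" and w: "w \<in> carrier_vec m"
  and Nu: "N u = 1" and uw: "u \<bullet> w = 0"
  shows "(c \<bullet> w)^2 \<le> (N c - (c \<bullet> u)^2) * N w"
proof -
  define c' where "c' = c - (c \<bullet> u) \<cdot>\<^sub>v u"
  have c'c: "c' \<in> carrier_vec m" unfolding c'_def using c u by simp
  have "c' \<bullet> w = c \<bullet> w - (c \<bullet> u) * (u \<bullet> w)" unfolding c'_def using c u w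
    by (simp add: minus_scalar_prod_distrib)
  hence cw: "c' \<bullet> w = c \<bullet> w" using uw by simp
  have "N c' = N c - 2 * (c \<bullet> u) * (c \<bullet> u) + (c \<bullet> u)^2 * N u"
    unfolding c'_def by (rule N_minus_smult[OF c u])
  hence Nc': "N c' = N c - (c \<bullet> u)^2" using Nu by (simp add: power2_eq_square)
  have "(c' \<bullet> w)^2 \<le> N c' * N w" using cs[of c' w] c'c w by simp
  thus ?thesis unfolding cw Nc' .
qed

lemma bessel_mat: assumes A: "A \<in> carrier_mat r c" and u: "u \<in> carrier_vec r" and w: "w \<in> carrier_vec r"
  and Nu: "N u = 1" and uw: "u \<bullet> w = 0"
  shows "N (transpose_mat A *\<^sub>v w) \<le> (frob A ^ 2 - N (transpose_mat A *\<^sub>v u)) * N w"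
proof -
  have idx: "(transpose_mat A *\<^sub>v x) $ j = col A j \<bullet> x" if "j < c" for x j using A that by simp
  have "N (transpose_mat A *\<^sub>v w) = (\<Sum>j<c. (col A j \<bullet> w)^2)"
    using A by (simp add: scalar_prod_def[of "transpose_mat A *\<^sub>v w"] atLeast0LessThan power2_eq_square)
  also have "\<dots> \<le> (\<Sum>j<c. (N (col A j) - (col A j \<bullet> u)^2) * N w)"
    using A u w Nu uw by (intro sum_mono bessel_vec[of _ r]) auto
  also have "\<dots> = ((\<Sum>j<c. N (col A j)) - (\<Sum>j<c. (col A j \<bullet> u)^2)) * N w"
    by (simp add: sum_distrib_right sum_subtractf left_diff_distrib)
  also have "(\<Sum>j<c. N (col A j)) = frob A ^ 2"
    unfolding frob_sq using A by (subst sum.swap) (simp add: scalar_prod_def atLeast0LessThan power2_eq_square)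
  also have "(\<Sum>j<c. (col A j \<bullet> u)^2) = N (transpose_mat A *\<^sub>v u)"
    using A by (simp add: scalar_prod_def[of "transpose_mat A *\<^sub>v u"] atLeast0LessThan power2_eq_square)
  finally show ?thesis .
qed

lemma N_of_vnorm1: "vnorm v = 1 \<Longrightarrow> N v = 1" using vnorm_sq[of v] by simp

context gd begin

lemma partII: assumes k: "1 \<le> k" "k < L" and nz: "W t (Suc k) \<noteq> 0\<^sub>m (dims (Suc k)) (dims k)"
  and sv1: "top_sv (W t k) u v'" and sv2: "top_sv (W t (Suc k)) u' v"
  shows "(v \<bullet> u)^2 \<ge> 1 - (Dconst L (W 0) + 3 * R0 + spec (W 0 (Suc k))^2 + spec (W 0 k)^2) / spec (W t (Suc k))^2"
proof -
  have Wk: "W t k \<in> carrier_mat (dims k) (dims (k-1))" using Wc k by simp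
  have Wk1: "W t (Suc k) \<in> carrier_mat (dims (Suc k)) (dims k)" using Wc[of "Suc k" t] k by simp
  have W0k: "W 0 k \<in> carrier_mat (dims k) (dims (k-1))" using Wc k by simp
  have W0k1: "W 0 (Suc k) \<in> carrier_mat (dims (Suc k)) (dims k)" using Wc[of "Suc k" 0] k by simp
  define sk where "sk = spec (W t k)"
  define s1 where "s1 = spec (W t (Suc k))"
  have u: "u \<in> carrier_vec (dims k)" and v': "v' \<in> carrier_vec (dims (k-1))" and Nu: "N u = 1" and Nv': "N v' = 1"
    and Wv': "W t k *\<^sub>v v' = sk \<cdot>\<^sub>v u" and WTu: "transpose_mat (W t k) *\<^sub>v u = sk \<cdot>\<^sub>v v'"
    using sv1 Wk unfolding top_sv_def sk_def by (auto intro: N_of_vnorm1)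
  have u': "u' \<in> carrier_vec (dims (Suc k))" and v: "v \<in> carrier_vec (dims k)" and Nu': "N u' = 1" and Nv: "N v = 1"
    and Wv: "W t (Suc k) *\<^sub>v v = s1 \<cdot>\<^sub>v u'"
    using sv2 Wk1 unfolding top_sv_def s1_def by (auto intro: N_of_vnorm1)
  define a where "a = u \<bullet> v"
  have a2: "a^2 \<le> 1" using cs[of u v] u v Nu Nv unfolding a_def by simp
  have a0: "0 \<le> a^2" by simp
  have vu: "v \<bullet> u = a" unfolding a_def using u v by (simp add: sp_comm)
  have F1: "N (W t (Suc k) *\<^sub>v v) = s1^2" unfolding Wv N_smult Nu' by simp
  have F2: "N (transpose_mat (W t k) *\<^sub>v u) = sk^2" unfolding WTu N_smult Nv' by simp
  define E where "E = frob (W t k)^2 - sk^2"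
  have F3: "N (transpose_mat (W t k) *\<^sub>v v) \<le> a^2 * sk^2 + (1 - a^2) * E"
  proof -
    define w where "w = v - a \<cdot>\<^sub>v u"
    have w: "w \<in> carrier_vec (dims k)" unfolding w_def using u v by simp
    have uw: "u \<bullet> w = 0" unfolding w_def a_def using u v Nu
      by (simp add: scalar_prod_minus_distrib[of u "dims k"] sp_comm)
    have Nw: "N w = 1 - a^2" unfolding w_def N_minus_smult[OF v u] Nv Nu using u v
      by (simp add: a_def sp_comm power2_eq_square)
    have vw: "v = w + a \<cdot>\<^sub>v u" unfolding w_def using u v by (intro eq_vecI) auto
    have Tv: "transpose_mat (W t k) *\<^sub>v v = transpose_mat (W t k) *\<^sub>v w + a \<cdot>\<^sub>v (sk \<cdot>\<^sub>v v')"
    proof -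
      have "transpose_mat (W t k) *\<^sub>v v = transpose_mat (W t k) *\<^sub>v w + transpose_mat (W t k) *\<^sub>v (a \<cdot>\<^sub>v u)"
        unfolding vw using Wk w u by (intro mult_add_distrib_mat_vec[of _ "dims (k-1)" "dims k"]) auto
      also have "transpose_mat (W t k) *\<^sub>v (a \<cdot>\<^sub>v u) = a \<cdot>\<^sub>v (transpose_mat (W t k) *\<^sub>v u)"
        using Wk u by (intro mult_mat_vec[of _ "dims (k-1)" "dims k"]) auto
      finally show ?thesis unfolding WTu .
    qed
    have orth: "(transpose_mat (W t k) *\<^sub>v w) \<bullet> (a \<cdot>\<^sub>v (sk \<cdot>\<^sub>v v')) = 0"
    proof -
      have "(transpose_mat (W t k) *\<^sub>v w) \<bullet> v' = w \<bullet> (W t k *\<^sub>v v')" by (rule transpose_vec_mult_scalar[OF Wk v' w])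
      also have "\<dots> = sk * (w \<bullet> u)" unfolding Wv' using w u by simp
      also have "w \<bullet> u = 0" using uw u w by (simp add: sp_comm)
      finally show ?thesis using Wk v' by simp
    qed
    have "N (transpose_mat (W t k) *\<^sub>v v) = N (transpose_mat (W t k) *\<^sub>v w) + a^2 * sk^2"
      unfolding Tv using N_add[of "transpose_mat (W t k) *\<^sub>v w" "a \<cdot>\<^sub>v (sk \<cdot>\<^sub>v v')"] orth Wk v' Nv'
      by (simp add: N_smult power_mult_distrib)
    also have "N (transpose_mat (W t k) *\<^sub>v w) \<le> (frob (W t k)^2 - N (transpose_mat (W t k) *\<^sub>v u)) * N w"
      by (rule bessel_mat[OF Wk u w Nu uw])
    finally show ?thesis unfolding F2 Nw E_def by (simp add: algebra_simps)
  qed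
  have F4: "s1^2 = N (transpose_mat (W t k) *\<^sub>v v) - f t k v" unfolding f_def F1[symmetric] by simp
  have F5: "sk^2 \<le> s1^2 + f t k u"
  proof -
    have "sk^2 = N (W t (Suc k) *\<^sub>v u) + f t k u" unfolding f_def F2[symmetric] by simp
    moreover have "N (W t (Suc k) *\<^sub>v u) \<le> s1^2" using N_spec[OF Wk1 u] Nu unfolding s1_def by simp
    ultimately show ?thesis by simp
  qed
  have F6: "f t k u \<le> spec (W 0 k)^2 + Sk t k"
  proof -
    have "f 0 k u \<le> spec (W 0 k)^2"
      unfolding f_def using N_spec_T[OF W0k u] Nu N_nonneg[of "W 0 (Suc k) *\<^sub>v u"] by simp
    thus ?thesis using f_upper[OF k u, of t] Nu by simp
  qed
  have F7: "- f t k v \<le> spec (W 0 (Suc k))^2 + Sk t (Suc k)"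
  proof -
    have "- f 0 k v \<le> spec (W 0 (Suc k))^2"
      unfolding f_def using N_spec[OF W0k1 v] Nv N_nonneg[of "transpose_mat (W 0 k) *\<^sub>v v"] by simp
    thus ?thesis using f_lower[OF k v, of t] Nv by simp
  qed
  have F8: "E \<le> Dconst L (W 0) + SS t" unfolding E_def sk_def using partI_aux[of k t] k by simp
  have E0: "Dconst L (W 0) + SS t \<ge> 0" using Dconst_nonneg SS_bound[of t] Sk_sum[of t] Sk_nonneg
    by (smt (verit) sum_nonneg)
  have sk0: "0 \<le> spec (W 0 k)^2 + Sk t k" using Sk_nonneg by simp
  have main: "(1 - a^2) * s1^2 \<le> Dconst L (W 0) + 3 * R0 + spec (W 0 (Suc k))^2 + spec (W 0 k)^2"
  proof -
    have "s1^2 \<le> a^2 * sk^2 + (1 - a^2) * E - f t k v" using F3 F4 by simp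
    also have "\<dots> \<le> a^2 * (s1^2 + f t k u) + (1 - a^2) * E - f t k v"
      using F5 a0 by (simp add: mult_left_mono)
    finally have "(1 - a^2) * s1^2 \<le> a^2 * f t k u + (1 - a^2) * E - f t k v" by (simp add: algebra_simps)
    also have "\<dots> \<le> a^2 * (spec (W 0 k)^2 + Sk t k) + (1 - a^2) * (Dconst L (W 0) + SS t) + (spec (W 0 (Suc k))^2 + Sk t (Suc k))"
    proof -
      have "a^2 * f t k u \<le> a^2 * (spec (W 0 k)^2 + Sk t k)" using F6 a0 by (rule mult_left_mono)
      moreover have "(1 - a^2) * E \<le> (1 - a^2) * (Dconst L (W 0) + SS t)" using F8 a2 by (intro mult_left_mono) auto
      ultimately show ?thesis using F7 by linarith
    qed
    also have "\<dots> \<le> 1 * (spec (W 0 k)^2 + Sk t k) + 1 * (Dconst L (W 0) + SS t) + (spec (W 0 (Suc k))^2 + Sk t (Suc k))"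
      using a0 a2 sk0 E0 by (intro add_mono mult_right_mono) auto
    also have "\<dots> \<le> Dconst L (W 0) + 3 * R0 + spec (W 0 (Suc k))^2 + spec (W 0 k)^2"
      using Sk2_le_SS[OF k, of t] SS_bound[of t] R0_nonneg by simp
    finally show ?thesis .
  qed
  have s1pos: "s1 > 0" unfolding s1_def by (rule spec_pos[OF Wk1 nz])
  hence "1 - a^2 \<le> (Dconst L (W 0) + 3 * R0 + spec (W 0 (Suc k))^2 + spec (W 0 k)^2) / s1^2"
    using main by (simp add: field_simps)
  thus ?thesis unfolding vu s1_def by simp
qed

end

context gd begin

definition Bq :: real where "Bq = (\<Sum>j\<in>{1..<L}. spec (A0 j)) + 2 * R0"
definition Max0 :: real where "Max0 = Max {frob (W 0 k) ^ 2 | k. 1 \<le> k \<and> k \<le> L}"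

lemma Bq_nonneg: "Bq \<ge> 0" unfolding Bq_def using specA_nonneg R0_nonneg by (auto intro!: add_nonneg_nonneg sum_nonneg)

lemma Max0_nonneg: "Max0 \<ge> 0"
proof -
  have "frob (W 0 1)^2 \<le> Max0" unfolding Max0_def by (rule Max_frob0) (use L_ge in auto)
  thus ?thesis by (rule order_trans[OF zero_le_power2])
qed

lemma f0_upper: assumes j: "1 \<le> j" "j < L" and vv: "vv \<in> carrier_vec (dims j)"
  shows "f 0 j vv \<le> spec (A0 j) * N vv"
proof -
  have "f 0 j vv = vv \<bullet> (A0 j *\<^sub>v vv)" unfolding f_def A0_def
    by (rule quad_identity[symmetric]) (use Wc[of j 0] Wc[of "Suc j" 0] j vv in auto)
  thus ?thesis using quad_spec[OF A0c[OF j] vv] by simp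
qed

lemma f_upperB: assumes j: "1 \<le> j" "j < L" and yy: "yy \<in> carrier_vec (dims j)"
  shows "f t j yy \<le> Bq * N yy"
proof -
  have "f t j yy \<le> f 0 j yy + Sk t j * N yy" by (rule f_upper[OF j yy])
  also have "\<dots> \<le> spec (A0 j) * N yy + SS t * N yy"
    using f0_upper[OF j yy] Sk_le_SS[of j t] j N_nonneg[of yy] by (intro add_mono mult_right_mono) auto
  also have "\<dots> \<le> Bq * N yy"
  proof -
    have "spec (A0 j) \<le> (\<Sum>j\<in>{1..<L}. spec (A0 j))" using j specA_nonneg by (intro member_le_sum) auto
    moreover have "SS t \<le> 2 * R0" using SS_bound[of t] R0_nonneg by simp
    ultimately have "spec (A0 j) + SS t \<le> Bq" unfolding Bq_def by simp
    hence "(spec (A0 j) + SS t) * N yy \<le> Bq * N yy" using N_nonneg[of yy] by (rule mult_right_mono)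
    thus ?thesis by (simp add: distrib_right)
  qed
  finally show ?thesis .
qed

lemma frob_le1: assumes k: "1 \<le> k" "k \<le> L" shows "frob (W t k)^2 \<le> frob (W t 1)^2 + (Max0 + 2 * R0)"
proof -
  have k1: "1 \<le> (1::nat)" "1 \<le> L" using L_ge by auto
  have "frob (W t k)^2 - frob (W t 1)^2 = frob (W 0 k)^2 - frob (W 0 1)^2 + Sk t k - Sk t 1"
    using frob_evol[OF k, of t] frob_evol[OF k1, of t] by simp
  moreover have "frob (W 0 k)^2 \<le> Max0" unfolding Max0_def by (rule Max_frob0[OF k])
  moreover have "Sk t k \<le> 2 * R0" using Sk_le_SS[of k t] SS_bound[of t] R0_nonneg k by simp
  moreover have "frob (W 0 1)^2 \<ge> 0" by simp
  ultimately show ?thesis using Sk_nonneg[of t 1] by linarith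
qed

definition yv :: "nat \<Rightarrow> real vec \<Rightarrow> nat \<Rightarrow> real vec" where "yv t v j = qv (W t) v j"

lemma yc: "v \<in> carrier_vec d \<Longrightarrow> j \<le> L \<Longrightarrow> yv t v j \<in> carrier_vec (dims j)"
  unfolding yv_def using qv_carrier[OF nd, of v j] dims_0 by simp

lemma y_step: "1 \<le> j \<Longrightarrow> yv t v j = W t j *\<^sub>v yv t v (j-1)"
  unfolding yv_def by (cases j) auto

lemma chain_step: assumes v: "v \<in> carrier_vec d" and j: "1 \<le> j" "j < L"
  and IH: "N (yv t v j) \<ge> \<rho> * N (yv t v (j-1))"
  shows "N (yv t v (Suc j)) \<ge> (\<rho> - Bq) * N (yv t v j)"
proof -
  have Wj: "W t j \<in> carrier_mat (dims j) (dims (j-1))" using Wc j by simp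
  have yj: "yv t v j \<in> carrier_vec (dims j)" using yc[OF v] j by simp
  have yj1: "yv t v (j-1) \<in> carrier_vec (dims (j-1))" using yc[OF v] j by simp
  have T: "N (transpose_mat (W t j) *\<^sub>v yv t v j) \<ge> \<rho> * N (yv t v j)"
  proof (cases "\<rho> \<le> 0")
    case True
    have "\<rho> * N (yv t v j) \<le> 0" using True N_nonneg[of "yv t v j"] by (rule mult_nonpos_nonneg)
    thus ?thesis using N_nonneg[of "transpose_mat (W t j) *\<^sub>v yv t v j"] by linarith
  next
    case False
    hence rho: "\<rho> > 0" by simp
    show ?thesis
    proof (cases "N (yv t v (j-1)) = 0")
      case True
      hence "N (yv t v j) \<le> 0" using N_spec[OF Wj yj1] y_step[OF j(1), of t v] by simp
      hence "N (yv t v j) = 0" using N_nonneg[of "yv t v j"] by simp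
      thus ?thesis using N_nonneg[of "transpose_mat (W t j) *\<^sub>v yv t v j"] by simp
    next
      case False
      hence pos: "N (yv t v (j-1)) > 0" using N_nonneg[of "yv t v (j-1)"] by simp
      have "N (yv t v j) = yv t v (j-1) \<bullet> (transpose_mat (W t j) *\<^sub>v yv t v j)"
      proof -
        have "N (yv t v j) = (W t j *\<^sub>v yv t v (j-1)) \<bullet> yv t v j" using y_step[OF j(1), of t v] by simp
        also have "\<dots> = yv t v (j-1) \<bullet> (transpose_mat (W t j) *\<^sub>v yv t v j)"
          using transpose_vec_mult_scalar[of "transpose_mat (W t j)" "dims (j-1)" "dims j" "yv t v j" "yv t v (j-1)"] Wj yj yj1 by simp
        finally show ?thesis .
      qed
      hence "(N (yv t v j))^2 \<le> N (yv t v (j-1)) * N (transpose_mat (W t j) *\<^sub>v yv t v j)"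
        using cs[of "yv t v (j-1)" "transpose_mat (W t j) *\<^sub>v yv t v j"] Wj yj1 by simp
      moreover have "\<rho> * N (yv t v (j-1)) * N (yv t v j) \<le> (N (yv t v j))^2"
        using IH N_nonneg[of "yv t v j"] by (simp add: power2_eq_square mult_right_mono)
      ultimately have "N (yv t v (j-1)) * (\<rho> * N (yv t v j)) \<le> N (yv t v (j-1)) * N (transpose_mat (W t j) *\<^sub>v yv t v j)"
        by (simp add: algebra_simps)
      thus ?thesis using pos by simp
    qed
  qed
  have A: "N (yv t v (Suc j)) = N (transpose_mat (W t j) *\<^sub>v yv t v j) - f t j (yv t v j)"
    unfolding f_def yv_def by simp
  have B: "f t j (yv t v j) \<le> Bq * N (yv t v j)" by (rule f_upperB[OF j yj])
  have "(\<rho> - Bq) * N (yv t v j) = \<rho> * N (yv t v j) - Bq * N (yv t v j)" by (simp add: left_diff_distrib)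
  thus ?thesis using A B T by linarith
qed

lemma chain: assumes v: "v \<in> carrier_vec d" and sv: "top_sv (W t 1) u v"
  shows "1 \<le> j \<Longrightarrow> j \<le> L \<Longrightarrow> N (yv t v j) \<ge> (spec (W t 1)^2 - (real j - 1) * Bq) * N (yv t v (j-1))"
proof (induction j)
  case 0 thus ?case by simp
next
  case (Suc j)
  show ?case
  proof (cases "j = 0")
    case True
    have W1: "W t 1 \<in> carrier_mat (dims 1) (dims 0)" using Wc[of 1 t] L_ge by simp
    have "N v = 1" and "W t 1 *\<^sub>v v = spec (W t 1) \<cdot>\<^sub>v u" and "N u = 1"
      using sv unfolding top_sv_def by (auto intro: N_of_vnorm1)
    hence "N (yv t v 1) = spec (W t 1)^2" unfolding yv_def by (simp add: N_smult)
    thus ?thesis using True \<open>N v = 1\<close> by (simp add: yv_def)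
  next
    case False
    hence j: "1 \<le> j" "j < L" using Suc by auto
    have "N (yv t v (Suc j)) \<ge> ((spec (W t 1)^2 - (real j - 1) * Bq) - Bq) * N (yv t v j)"
      using chain_step[OF v j] Suc j by simp
    thus ?thesis by (simp add: algebra_simps)
  qed
qed

lemma chain_prod: assumes v: "v \<in> carrier_vec d" and sv: "top_sv (W t 1) u v"
  and rho: "spec (W t 1)^2 - (real L - 1) * Bq \<ge> 0"
  shows "j \<le> L \<Longrightarrow> N (yv t v j) \<ge> (spec (W t 1)^2 - (real L - 1) * Bq)^j"
proof (induction j)
  case 0
  have "N v = 1" using sv unfolding top_sv_def by (auto intro: N_of_vnorm1)
  thus ?case by (simp add: yv_def)
next
  case (Suc j)
  let ?r = "spec (W t 1)^2 - (real L - 1) * Bq"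
  have "?r * N (yv t v j) \<le> (spec (W t 1)^2 - (real (Suc j) - 1) * Bq) * N (yv t v j)"
  proof (rule mult_right_mono)
    have "(real (Suc j) - 1) * Bq \<le> (real L - 1) * Bq" using Suc.prems Bq_nonneg by (intro mult_right_mono) auto
    thus "?r \<le> spec (W t 1)^2 - (real (Suc j) - 1) * Bq" by simp
  qed (rule N_nonneg)
  also have "\<dots> \<le> N (yv t v (Suc j))" using chain[OF v sv, of "Suc j"] Suc.prems by simp
  finally have "?r * N (yv t v j) \<le> N (yv t v (Suc j))" .
  moreover have "?r * ?r^j \<le> ?r * N (yv t v j)" using Suc rho by (intro mult_left_mono) auto
  ultimately show ?case by simp
qed

lemma chain_upper: assumes v: "v \<in> carrier_vec d" "N v = 1"
  shows "j \<le> L \<Longrightarrow> N (yv t v j) \<le> (\<Prod>k\<in>{1..j}. frob (W t k)^2)"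
proof (induction j)
  case 0 thus ?case using v by (simp add: yv_def)
next
  case (Suc j)
  have W: "W t (Suc j) \<in> carrier_mat (dims (Suc j)) (dims j)" using Wc[of "Suc j" t] Suc by simp
  have "N (yv t v (Suc j)) \<le> frob (W t (Suc j))^2 * N (yv t v j)"
    unfolding yv_def using N_mv_le[OF W yc[OF v(1), of j t, unfolded yv_def]] Suc by simp
  also have "\<dots> \<le> frob (W t (Suc j))^2 * (\<Prod>k\<in>{1..j}. frob (W t k)^2)" using Suc by (intro mult_left_mono) auto
  finally show ?case by (simp add: mult.commute)
qed

end

context gd begin

lemma value_bounds:
  assumes sv: "top_sv (W t 1) u vv"
    and F: "frob (W t 1)^2 \<ge> Dconst L (W 0) + 2 * R0 + (real L - 1) * Bq + 1"
  shows "\<bar>((1 / (\<Prod>k\<in>{1..L}. frob (W t k))) \<cdot>\<^sub>v wprod d L (W t)) \<bullet> vv\<bar> \<le> 1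
     \<and> ((frob (W t 1)^2 - (Dconst L (W 0) + 2 * R0 + (real L - 1) * Bq)) / (frob (W t 1)^2 + (Max0 + 2 * R0)))^L
        \<le> \<bar>((1 / (\<Prod>k\<in>{1..L}. frob (W t k))) \<cdot>\<^sub>v wprod d L (W t)) \<bullet> vv\<bar>"
proof -
  define Fv where "Fv = frob (W t 1)^2"
  define K1 where "K1 = Dconst L (W 0) + 2 * R0 + (real L - 1) * Bq"
  define B' where "B' = Max0 + 2 * R0"
  define P where "P = (\<Prod>k\<in>{1..L}. frob (W t k))"
  have L1: "1 \<le> (1::nat)" "1 \<le> L" using L_ge by auto
  have W1: "W t 1 \<in> carrier_mat (dims 1) (dims 0)" using Wc[OF L1] by simp
  have vc: "vv \<in> carrier_vec d" and Nv: "N vv = 1" using sv W1 dims_0 unfolding top_sv_def by (auto intro: N_of_vnorm1)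
  have B'0: "B' \<ge> 0" unfolding B'_def using Max0_nonneg R0_nonneg by simp
  have FK: "Fv - K1 \<ge> 1" using F unfolding Fv_def K1_def by simp
  have s1: "spec (W t 1)^2 \<ge> Fv - (Dconst L (W 0) + 2 * R0)" using partI[OF L1, of t] unfolding Fv_def by simp
  define \<rho> where "\<rho> = spec (W t 1)^2 - (real L - 1) * Bq"
  have rho: "\<rho> \<ge> Fv - K1" unfolding \<rho>_def K1_def using s1 by simp
  have rho0: "\<rho> \<ge> 0" using rho FK by simp
  have low: "N (yv t vv L) \<ge> (Fv - K1)^L"
  proof -
    have "(Fv - K1)^L \<le> \<rho>^L" using rho FK by (intro power_mono) auto
    also have "\<dots> \<le> N (yv t vv L)" using chain_prod[OF vc sv, of L] rho0 unfolding \<rho>_def by simp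
    finally show ?thesis .
  qed
  have up: "N (yv t vv L) \<le> P^2"
  proof -
    have "N (yv t vv L) \<le> (\<Prod>k\<in>{1..L}. frob (W t k)^2)" using chain_upper[OF vc Nv, of L t] by simp
    also have "\<dots> = P^2" unfolding P_def by (simp add: prod_power_distrib)
    finally show ?thesis .
  qed
  have P2: "P^2 \<le> (Fv + B')^L"
  proof -
    have "P^2 = (\<Prod>k\<in>{1..L}. frob (W t k)^2)" unfolding P_def by (simp add: prod_power_distrib)
    also have "\<dots> \<le> (\<Prod>k\<in>{1..L}. Fv + B')" using frob_le1 unfolding Fv_def B'_def
      by (intro prod_mono) auto
    finally show ?thesis by simp
  qed
  have P0: "P \<ge> 0" unfolding P_def by (auto intro!: prod_nonneg frob_nonneg)
  have FB: "Fv + B' > 0" using FK B'0 K1_def Fv_def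
    by (smt (verit, best) Bq_nonneg Dconst_nonneg R0_nonneg L_ge of_nat_1 of_nat_le_iff mult_nonneg_nonneg one_le_numeral le_trans)
  have yL: "yv t vv L \<in> carrier_vec 1" using yc[OF vc, of L t] dims_L by simp
  have wp: "wprod d L (W t) \<bullet> vv = yv t vv L $ 0" unfolding yv_def using p_top[OF nd dims_0 dims_L vc] by simp
  have val: "((1 / P) \<cdot>\<^sub>v wprod d L (W t)) \<bullet> vv = (1/P) * (yv t vv L $ 0)"
  proof -
    have "dim_vec (wprod d L (W t)) = d"
    proof -
      have "mprod d (W t) L \<in> carrier_mat (dims L) d" using mprod_carrier[OF nd[of t] dims_0, of L] by simp
      thus ?thesis unfolding wprod_def by simp
    qed
    thus ?thesis using vc wp by simp
  qed
  have Ny: "N (yv t vv L) = (yv t vv L $ 0)^2" using yL by (simp add: scalar_prod_def power2_eq_square)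
  have posN: "N (yv t vv L) > 0" using low FK by (smt (verit) zero_less_power)
  hence Ppos: "P > 0" using up P0 by (smt (verit) zero_less_power2 power_zero_numeral)
  define V where "V = \<bar>(1/P) * (yv t vv L $ 0)\<bar>"
  have V2: "V^2 = N (yv t vv L) / P^2" unfolding V_def Ny by (simp add: power_mult_distrib power_divide)
  have V0: "V \<ge> 0" unfolding V_def by simp
  have V1: "V \<le> 1"
  proof -
    have "V^2 \<le> 1" unfolding V2 using up Ppos by simp
    thus ?thesis using V0 by (simp add: power_le_one_iff)
  qed
  have Vlow: "((Fv - K1) / (Fv + B'))^L \<le> V"
  proof -
    have "((Fv - K1) / (Fv + B'))^L = (Fv - K1)^L / (Fv + B')^L" by (simp add: power_divide)
    also have "\<dots> \<le> N (yv t vv L) / P^2"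
    proof (rule frac_le)
      show "0 \<le> N (yv t vv L)" by (rule N_nonneg)
      show "(Fv - K1)^L \<le> N (yv t vv L)" by (rule low)
      show "0 < P^2" using Ppos by simp
      show "P^2 \<le> (Fv + B')^L" by (rule P2)
    qed
    also have "\<dots> = V^2" unfolding V2 ..
    also have "\<dots> \<le> V" using V0 V1 by (simp add: power2_eq_square mult_left_le)
    finally show ?thesis .
  qed
  show ?thesis using V1 Vlow unfolding V_def val[unfolded P_def] Fv_def K1_def B'_def P_def by simp
qed

end

context gd begin

lemma Max_frob_le: "(Max {frob (W t k) | k. 1 \<le> k \<and> k \<le> L})^2 \<le> frob (W t 1)^2 + (Max0 + 2 * R0)"
proof -
  have eq: "{frob (W t k) | k. 1 \<le> k \<and> k \<le> L} = (\<lambda>k. frob (W t k)) ` {1..L}" by auto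
  have "Max ((\<lambda>k. frob (W t k)) ` {1..L}) \<in> (\<lambda>k. frob (W t k)) ` {1..L}"
    using L_ge by (intro Max_in) auto
  then obtain k where k: "1 \<le> k" "k \<le> L" "Max ((\<lambda>k. frob (W t k)) ` {1..L}) = frob (W t k)" by auto
  show ?thesis unfolding eq k(3) by (rule frob_le1[OF k(1,2)])
qed

lemma Max_frob_nonneg: "Max {frob (W t k) | k. 1 \<le> k \<and> k \<le> L} \<ge> 0"
proof -
  have eq: "{frob (W t k) | k. 1 \<le> k \<and> k \<le> L} = (\<lambda>k. frob (W t k)) ` {1..L}" by auto
  have "frob (W t 1) \<le> Max ((\<lambda>k. frob (W t k)) ` {1..L})" using L_ge by (intro Max_ge) auto
  thus ?thesis unfolding eq using frob_nonneg[of "W t 1"] by simp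
qed

lemma partIII:
  assumes v1: "\<forall>t. \<exists>u. top_sv (W t 1) u (v1 t)"
    and lim: "filterlim (\<lambda>t. Max {frob (W t k) | k. 1 \<le> k \<and> k \<le> L}) at_top sequentially"
  shows "((\<lambda>t. \<bar>((1 / (\<Prod>k\<in>{1..L}. frob (W t k))) \<cdot>\<^sub>v wprod d L (W t)) \<bullet> v1 t\<bar>) \<longlongrightarrow> 1) sequentially"
proof -
  define Mx where "Mx t = Max {frob (W t k) | k. 1 \<le> k \<and> k \<le> L}" for t
  define Fv where "Fv t = frob (W t 1)^2" for t
  define K1 where "K1 = Dconst L (W 0) + 2 * R0 + (real L - 1) * Bq"
  define B' where "B' = Max0 + 2 * R0"
  define V where "V t = \<bar>((1 / (\<Prod>k\<in>{1..L}. frob (W t k))) \<cdot>\<^sub>v wprod d L (W t)) \<bullet> v1 t\<bar>" for t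
  define g where "g t = ((Fv t - K1) / (Fv t + B'))^L" for t
  have lim': "filterlim Mx at_top sequentially" using lim unfolding Mx_def .
  have ev1: "eventually (\<lambda>t. 1 \<le> Mx t) sequentially" using lim' by (simp add: filterlim_at_top)
  have Finf: "filterlim Fv at_top sequentially"
  proof (rule filterlim_at_top_mono)
    show "filterlim (\<lambda>t. (- B') + Mx t) at_top sequentially"
      by (rule filterlim_tendsto_add_at_top[OF tendsto_const lim'])
    show "eventually (\<lambda>t. - B' + Mx t \<le> Fv t) sequentially"
      using ev1
    proof eventually_elim
      case (elim t)
      have "Mx t \<le> (Mx t)^2" using elim by (simp add: power2_eq_square)
      moreover have "(Mx t)^2 \<le> Fv t + B'" unfolding Mx_def Fv_def B'_def by (rule Max_frob_le)
      ultimately show ?case by simp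
    qed
  qed
  have B'0: "B' \<ge> 0" unfolding B'_def using Max0_nonneg R0_nonneg by simp
  have g1: "(g \<longlongrightarrow> 1) sequentially"
  proof -
    have den: "filterlim (\<lambda>t. B' + Fv t) at_infinity sequentially"
      by (rule filterlim_at_top_imp_at_infinity[OF filterlim_tendsto_add_at_top[OF tendsto_const Finf]])
    have h0: "((\<lambda>t. (K1 + B') / (B' + Fv t)) \<longlongrightarrow> 0) sequentially"
      by (rule tendsto_divide_0[OF tendsto_const den])
    hence "((\<lambda>t. 1 - (K1 + B') / (B' + Fv t)) \<longlongrightarrow> 1 - 0) sequentially" by (intro tendsto_diff tendsto_const)
    hence r: "((\<lambda>t. 1 - (K1 + B') / (B' + Fv t)) \<longlongrightarrow> 1) sequentially" by simp
    have evp: "eventually (\<lambda>t. Fv t \<ge> 1) sequentially" using Finf by (simp add: filterlim_at_top)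
    have "eventually (\<lambda>t. 1 - (K1 + B') / (B' + Fv t) = (Fv t - K1) / (Fv t + B')) sequentially"
      using evp
    proof eventually_elim
      case (elim t)
      hence "B' + Fv t > 0" using B'0 by simp
      thus ?case by (simp add: field_simps)
    qed
    hence "((\<lambda>t. (Fv t - K1) / (Fv t + B')) \<longlongrightarrow> 1) sequentially" using r by (simp add: tendsto_cong)
    from tendsto_power[OF this, of L] show ?thesis unfolding g_def by simp
  qed
  have evF: "eventually (\<lambda>t. Fv t \<ge> K1 + 1) sequentially" using Finf by (simp add: filterlim_at_top)
  have bnds: "eventually (\<lambda>t. g t \<le> V t \<and> V t \<le> 1) sequentially"
    using evF
  proof eventually_elim
    case (elim t)
    obtain u where sv: "top_sv (W t 1) u (v1 t)" using v1 by blast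
    from value_bounds[OF sv] elim show ?case unfolding g_def V_def Fv_def K1_def B'_def by simp
  qed
  have "(V \<longlongrightarrow> 1) sequentially"
  proof (rule tendsto_sandwich[OF _ _ g1 tendsto_const])
    show "eventually (\<lambda>t. g t \<le> V t) sequentially" using bnds by (rule eventually_mono) simp
    show "eventually (\<lambda>t. V t \<le> 1) sequentially" using bnds by (rule eventually_mono) simp
  qed
  thus ?thesis unfolding V_def .
qed

end

theorem mainTheorem11:
  fixes n d L :: nat
    and x :: "nat \<Rightarrow> real vec" and y :: "nat \<Rightarrow> real"
    and l dl :: "real \<Rightarrow> real" and beta G :: real
    and dims :: "nat \<Rightarrow> nat"
    and W :: "nat \<Rightarrow> nat \<Rightarrow> real mat"
    and eta Rr :: "nat \<Rightarrow> real"
  assumes n_pos: "n \<ge> 1"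
    and x_dim: "\<And>i. i < n \<Longrightarrow> x i \<in> carrier_vec d"
    and x_norm: "\<And>i. i < n \<Longrightarrow> vnorm (x i) \<le> 1"
    and y_pm: "\<And>i. i < n \<Longrightarrow> y i = 1 \<or> y i = -1"
    and separable: "\<exists>u \<in> carrier_vec d. \<forall>i<n. u \<bullet> (y i \<cdot>\<^sub>v x i) > 0"
    and L_ge: "L \<ge> 2"
    and dims_pos: "\<And>k. k \<le> L \<Longrightarrow> dims k > 0"
    and dims_0: "dims 0 = d" and dims_L: "dims L = 1"
    and W0_dim: "\<And>k. 1 \<le> k \<Longrightarrow> k \<le> L \<Longrightarrow> W 0 k \<in> carrier_mat (dims k) (dims (k - 1))"
    \<comment> \<open>Assumption 1\<close>
    and l_deriv: "\<And>s. (l has_real_derivative dl s) (at s)"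
    and dl_cont: "continuous_on UNIV dl"
    and dl_neg: "\<And>s. dl s < 0"
    and l_bot: "filterlim l at_top at_bot"
    and l_top: "(l \<longlongrightarrow> 0) at_top"
    \<comment> \<open>Assumption 4\<close>
    and dl_lip: "\<And>a b. \<bar>dl a - dl b\<bar> \<le> beta * \<bar>a - b\<bar>"
    and dl_bdd: "\<And>s. \<bar>dl s\<bar> \<le> G"
    \<comment> \<open>gradient descent\<close>
    and GD: "\<And>t k. 1 \<le> k \<Longrightarrow> k \<le> L \<Longrightarrow>
      W (Suc t) k = W t k - eta t \<cdot>\<^sub>m grad_k l n (\<lambda>i. y i \<cdot>\<^sub>v x i) d L (W t) k"
    \<comment> \<open>Assumption 5\<close>
    and eta_def: "\<And>t. eta t = min (1 / betaR L beta G (Rr t)) 1"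
    and Rr_ball: "\<And>t k. 1 \<le> k \<Longrightarrow> k \<le> L \<Longrightarrow> frob (W t k) \<le> Rr t - 1"
    and Rr_keep: "\<And>t. (\<forall>k. 1 \<le> k \<and> k \<le> L \<longrightarrow> frob (W (Suc t) k) \<le> Rr t - 1)
      \<Longrightarrow> Rr (Suc t) = Rr t"
  shows
    "(\<forall>t k. 1 \<le> k \<and> k \<le> L \<longrightarrow>
        frob (W t k) ^ 2 - spec (W t k) ^ 2
          \<le> Dconst L (W 0) + 2 * risk l n (\<lambda>i. y i \<cdot>\<^sub>v x i) d L (W 0))
   \<and> (\<forall>t k u v u' v'. 1 \<le> k \<and> k < L \<and> W t (Suc k) \<noteq> 0\<^sub>m (dims (Suc k)) (dims k)
        \<and> top_sv (W t k) u v' \<and> top_sv (W t (Suc k)) u' v \<longrightarrow>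
        (v \<bullet> u) ^ 2 \<ge> 1 - (Dconst L (W 0) + 3 * risk l n (\<lambda>i. y i \<cdot>\<^sub>v x i) d L (W 0)
            + spec (W 0 (Suc k)) ^ 2 + spec (W 0 k) ^ 2) / spec (W t (Suc k)) ^ 2)
   \<and> (\<forall>v1 :: nat \<Rightarrow> real vec. (\<forall>t. \<exists>u. top_sv (W t 1) u (v1 t)) \<longrightarrow>
        filterlim (\<lambda>t. Max {frob (W t k) | k. 1 \<le> k \<and> k \<le> L}) at_top sequentially \<longrightarrow>
        ((\<lambda>t. \<bar>((1 / (\<Prod>k\<in>{1..L}. frob (W t k))) \<cdot>\<^sub>v wprod d L (W t)) \<bullet> v1 t\<bar>)
           \<longlongrightarrow> 1) sequentially)"
proof -
  interpret gd n d L x y l dl beta G dims W eta Rr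
    using n_pos x_dim x_norm y_pm L_ge dims_pos dims_0 dims_L W0_dim l_deriv dl_neg l_top dl_lip dl_bdd GD eta_def Rr_ball
    by unfold_locales auto
  have Req: "risk l n (\<lambda>i. y i \<cdot>\<^sub>v x i) d L (W 0) = R0" unfolding R0_def z_eq ..
  show ?thesis
  proof (intro conjI allI impI)
    fix t k assume k: "1 \<le> k \<and> k \<le> L"
    show "frob (W t k) ^ 2 - spec (W t k) ^ 2 \<le> Dconst L (W 0) + 2 * risk l n (\<lambda>i. y i \<cdot>\<^sub>v x i) d L (W 0)"
      unfolding Req using partI k by simp
  next
    fix t k u v u' v'
    assume h: "1 \<le> k \<and> k < L \<and> W t (Suc k) \<noteq> 0\<^sub>m (dims (Suc k)) (dims k) \<and> top_sv (W t k) u v' \<and> top_sv (W t (Suc k)) u' v"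
    show "(v \<bullet> u) ^ 2 \<ge> 1 - (Dconst L (W 0) + 3 * risk l n (\<lambda>i. y i \<cdot>\<^sub>v x i) d L (W 0)
            + spec (W 0 (Suc k)) ^ 2 + spec (W 0 k) ^ 2) / spec (W t (Suc k)) ^ 2"
      unfolding Req using partII h by blast
  next
    fix v1 :: "nat \<Rightarrow> real vec"
    assume "\<forall>t. \<exists>u. top_sv (W t 1) u (v1 t)"
      and "filterlim (\<lambda>t. Max {frob (W t k) | k. 1 \<le> k \<and> k \<le> L}) at_top sequentially"
    thus "((\<lambda>t. \<bar>((1 / (\<Prod>k\<in>{1..L}. frob (W t k))) \<cdot>\<^sub>v wprod d L (W t)) \<bullet> v1 t\<bar>) \<longlongrightarrow> 1) sequentially"
      by (rule partIII)
  qed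
qed

end
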